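(* Let $R$ be a commutative $k$-algebra with a system of coordinates $(x_1,\ldots,x_n)$ and $D=R[\partial_1,\ldots,\partial_n]$. Let $P_1,\ldots,P_n\in D$ have constant principal symbols $\sigma(P_i)\in k[\xi_1,\ldots,\xi_n]$ and assume $\det(\partial\sigma(P_i)/\partial\xi_j)_{i,j}\ne0$. Then every $Q\in D$ with $[P_i,Q]=0$ for $i=1,\ldots,n$ also has constant principal symbol.
   Context: $k$ is a field of characteristic zero. A system of coordinates of $R$: $(x_1,\ldots,x_n)\in R^n$ such that $\mathrm{Der}_k(R)\to R^n$, $\delta\mapsto(\delta(x_i))_i$ is bijective and the common kernel of all derivations is $k$; $\partial_i$ are the derivations with $\partial_i(x_j)=\delta_{ij}$. $D_m\subset D$ is the set of operators of order $\le m$; $\mathrm{gr}(D)=\bigoplus_m D_m/D_{m-1}\simeq R[\xi_1,\ldots,\xi_n]$ with $\xi_i$ the class of $\partial_i$. For $P$ of order $m$, the principal symbol is $\sigma_m(P)=P\bmod D_{m-1}$, a homogeneous polynomial in $\xi$ of degree $m$ with coefficients in $R$; it is called constant if it lies in $k[\xi_1,\ldots,\xi_n]$. *)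

theory Defs
  imports "HOL-Library.Poly_Mapping" "Jordan_Normal_Form.Determinant"
begin

text \<open>The base field k is modelled as a subfield K of the commutative ring R
  (the type 'r); R is then a commutative k-algebra.  Characteristic zero.\<close>

definition subfield_char0 :: "'r::comm_ring_1 set \<Rightarrow> bool" where
  "subfield_char0 K \<longleftrightarrow> 0 \<in> K \<and> 1 \<in> K \<and>
     (\<forall>a\<in>K. \<forall>b\<in>K. a + b \<in> K \<and> a * b \<in> K \<and> - a \<in> K) \<and>
     (\<forall>a\<in>K. a \<noteq> 0 \<longrightarrow> (\<exists>b\<in>K. a * b = 1)) \<and>
     (\<forall>m::nat. m > 0 \<longrightarrow> (of_nat m :: 'r) \<noteq> 0)"

definition derivation :: "'r::comm_ring_1 set \<Rightarrow> ('r \<Rightarrow> 'r) \<Rightarrow> bool" where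
  "derivation K \<delta> \<longleftrightarrow>
     (\<forall>a b. \<delta> (a + b) = \<delta> a + \<delta> b) \<and>
     (\<forall>c\<in>K. \<forall>a. \<delta> (c * a) = c * \<delta> a) \<and>
     (\<forall>a b. \<delta> (a * b) = a * \<delta> b + b * \<delta> a)"

text \<open>A system of coordinates (x_0, ..., x_{n-1}): the map Der_k(R) \<rightarrow> R^n,
  \<delta> \<mapsto> (\<delta>(x_i))_i, is bijective, and the common kernel of all derivations is k.\<close>

definition coordinate_system :: "'r::comm_ring_1 set \<Rightarrow> nat \<Rightarrow> (nat \<Rightarrow> 'r) \<Rightarrow> bool" where
  "coordinate_system K n x \<longleftrightarrow>
     (\<forall>v :: nat \<Rightarrow> 'r. \<exists>!\<delta>. derivation K \<delta> \<and> (\<forall>i<n. \<delta> (x i) = v i)) \<and>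
     {a. \<forall>\<delta>. derivation K \<delta> \<longrightarrow> \<delta> a = 0} = K"

definition partial :: "'r::comm_ring_1 set \<Rightarrow> nat \<Rightarrow> (nat \<Rightarrow> 'r) \<Rightarrow> nat \<Rightarrow> 'r \<Rightarrow> 'r" where
  "partial K n x i = (THE \<delta>. derivation K \<delta> \<and> (\<forall>j<n. \<delta> (x j) = (if j = i then 1 else 0)))"

definition dpow :: "'r::comm_ring_1 set \<Rightarrow> nat \<Rightarrow> (nat \<Rightarrow> 'r) \<Rightarrow> (nat \<Rightarrow>\<^sub>0 nat) \<Rightarrow> 'r \<Rightarrow> 'r" where
  "dpow K n x \<alpha> = foldr (\<lambda>i f. (partial K n x i ^^ Poly_Mapping.lookup \<alpha> i) \<circ> f) [0..<n] id"

text \<open>Multi-indices in n variables; coefficient families (= full symbols, polynomials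
  in \<xi>_0..\<xi>_{n-1} over R, represented as (nat =>0 nat) =>0 'r).\<close>

definition valid_symbol :: "nat \<Rightarrow> ((nat \<Rightarrow>\<^sub>0 nat) \<Rightarrow>\<^sub>0 'r::comm_ring_1) \<Rightarrow> bool" where
  "valid_symbol n c \<longleftrightarrow> (\<forall>\<alpha>\<in>Poly_Mapping.keys c. Poly_Mapping.keys \<alpha> \<subseteq> {..<n})"

definition op_of :: "'r::comm_ring_1 set \<Rightarrow> nat \<Rightarrow> (nat \<Rightarrow> 'r) \<Rightarrow>
    ((nat \<Rightarrow>\<^sub>0 nat) \<Rightarrow>\<^sub>0 'r) \<Rightarrow> 'r \<Rightarrow> 'r" where
  "op_of K n x c = (\<lambda>f. \<Sum>\<alpha>\<in>Poly_Mapping.keys c. Poly_Mapping.lookup c \<alpha> * dpow K n x \<alpha> f)"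

text \<open>D = R[\<partial>_1,...,\<partial>_n], the ring of differential operators, as operators on R.\<close>

definition diffops :: "'r::comm_ring_1 set \<Rightarrow> nat \<Rightarrow> (nat \<Rightarrow> 'r) \<Rightarrow> ('r \<Rightarrow> 'r) set" where
  "diffops K n x = {P. \<exists>c. valid_symbol n c \<and> P = op_of K n x c}"

definition full_symbol :: "'r::comm_ring_1 set \<Rightarrow> nat \<Rightarrow> (nat \<Rightarrow> 'r) \<Rightarrow> ('r \<Rightarrow> 'r) \<Rightarrow>
    ((nat \<Rightarrow>\<^sub>0 nat) \<Rightarrow>\<^sub>0 'r)" where
  "full_symbol K n x P = (THE c. valid_symbol n c \<and> P = op_of K n x c)"

definition total_deg :: "(nat \<Rightarrow>\<^sub>0 nat) \<Rightarrow> nat" where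
  "total_deg \<alpha> = (\<Sum>i\<in>Poly_Mapping.keys \<alpha>. Poly_Mapping.lookup \<alpha> i)"

text \<open>Order of P: the least m with P \<in> D_m, i.e. the maximal |\<alpha>| with a nonzero coefficient.\<close>

definition order :: "'r::comm_ring_1 set \<Rightarrow> nat \<Rightarrow> (nat \<Rightarrow> 'r) \<Rightarrow> ('r \<Rightarrow> 'r) \<Rightarrow> nat" where
  "order K n x P = Max (insert 0 (total_deg ` Poly_Mapping.keys (full_symbol K n x P)))"

text \<open>Principal symbol \<sigma>_m(P) = P mod D_{m-1}, m = order P, identified with the
  homogeneous polynomial \<Sum>_{|\<alpha>|=m} a_\<alpha> \<xi>^\<alpha> via gr(D) \<cong> R[\<xi>].\<close>

definition principal_symbol :: "'r::comm_ring_1 set \<Rightarrow> nat \<Rightarrow> (nat \<Rightarrow> 'r) \<Rightarrow> ('r \<Rightarrow> 'r) \<Rightarrow>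
    ((nat \<Rightarrow>\<^sub>0 nat) \<Rightarrow>\<^sub>0 'r)" where
  "principal_symbol K n x P = Abs_poly_mapping (\<lambda>\<alpha>.
     if total_deg \<alpha> = order K n x P then Poly_Mapping.lookup (full_symbol K n x P) \<alpha> else 0)"

definition constant_poly :: "'r::comm_ring_1 set \<Rightarrow> ((nat \<Rightarrow>\<^sub>0 nat) \<Rightarrow>\<^sub>0 'r) \<Rightarrow> bool" where
  "constant_poly K p \<longleftrightarrow> (\<forall>\<alpha>. Poly_Mapping.lookup p \<alpha> \<in> K)"

definition pderiv_xi :: "nat \<Rightarrow> ((nat \<Rightarrow>\<^sub>0 nat) \<Rightarrow>\<^sub>0 'r::comm_ring_1) \<Rightarrow> ((nat \<Rightarrow>\<^sub>0 nat) \<Rightarrow>\<^sub>0 'r)" where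
  "pderiv_xi j p = Abs_poly_mapping (\<lambda>\<alpha>.
     of_nat (Poly_Mapping.lookup \<alpha> j + 1) * Poly_Mapping.lookup p (\<alpha> + Poly_Mapping.single j 1))"

definition commutator :: "('r::comm_ring_1 \<Rightarrow> 'r) \<Rightarrow> ('r \<Rightarrow> 'r) \<Rightarrow> 'r \<Rightarrow> 'r" where
  "commutator P Q = (\<lambda>f. P (Q f) - Q (P f))"

end

theory Submission
  imports Defs
begin


lemma derivation_add: "derivation K \<delta> \<Longrightarrow> \<delta> (a + b) = \<delta> a + \<delta> b"
  by (simp add: derivation_def)
lemma derivation_mult: "derivation K \<delta> \<Longrightarrow> \<delta> (a * b) = a * \<delta> b + b * \<delta> a"
  by (simp add: derivation_def)
lemma derivation_cmult: "derivation K \<delta> \<Longrightarrow> c \<in> K \<Longrightarrow> \<delta> (c * a) = c * \<delta> a"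
  unfolding derivation_def by blast
lemma derivation_zero: "derivation K \<delta> \<Longrightarrow> \<delta> 0 = 0"
  using derivation_add[of K \<delta> 0 0] by simp
lemma derivation_uminus: "derivation K \<delta> \<Longrightarrow> \<delta> (- a) = - \<delta> a"
  using derivation_add[of K \<delta> a "-a"] derivation_zero[of K \<delta>] by (simp add: eq_neg_iff_add_eq_0 add.commute)
lemma derivation_diff: "derivation K \<delta> \<Longrightarrow> \<delta> (a - b) = \<delta> a - \<delta> b"
  using derivation_add[of K \<delta> a "-b"] derivation_uminus[of K \<delta> b] by simp
lemma derivation_sum: "derivation K \<delta> \<Longrightarrow> \<delta> (\<Sum>i\<in>A. f i) = (\<Sum>i\<in>A. \<delta> (f i))"
  by (induction A rule: infinite_finite_induct) (auto simp: derivation_zero derivation_add)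
lemma derivation_one: "derivation K \<delta> \<Longrightarrow> \<delta> 1 = 0"
  using derivation_mult[of K \<delta> 1 1] by simp

lemma subfield_of_nat: "subfield_char0 K \<Longrightarrow> of_nat m \<in> K"
  by (induction m) (auto simp: subfield_char0_def)

lemma subfield_of_nat_inv: "subfield_char0 K \<Longrightarrow> m > 0 \<Longrightarrow> \<exists>b\<in>K. of_nat m * b = 1"
  using subfield_of_nat[of K m] unfolding subfield_char0_def by blast

lemma subfield_of_nat_cancel:
  assumes "subfield_char0 (K::'r::comm_ring_1 set)" "m > 0" "of_nat m * (a::'r) = 0" shows "a = 0"
proof -
  obtain b where "b \<in> K" "of_nat m * b = (1::'r)" using subfield_of_nat_inv[OF assms(1,2)] by blast
  then have "a = b * (of_nat m * a)" by (simp add: algebra_simps)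
  then show ?thesis using assms(3) by simp
qed

lemma derivation_K: "derivation K \<delta> \<Longrightarrow> c \<in> K \<Longrightarrow> \<delta> c = 0"
  using derivation_cmult[of K \<delta> c 1] derivation_one[of K \<delta>] by simp

locale cs =
  fixes K :: "'r::comm_ring_1 set" and n :: nat and x :: "nat \<Rightarrow> 'r"
  assumes sf: "subfield_char0 K" and co: "coordinate_system K n x"
begin

abbreviation "d \<equiv> partial K n x"

lemma ex1: "\<exists>!\<delta>. derivation K \<delta> \<and> (\<forall>i<n. \<delta> (x i) = v i)"
  using co unfolding coordinate_system_def by blast

lemma kernel: "{a. \<forall>\<delta>. derivation K \<delta> \<longrightarrow> \<delta> a = 0} = K"
  using co unfolding coordinate_system_def by blast

lemma d_prop: "derivation K (d i) \<and> (\<forall>j<n. d i (x j) = (if j = i then 1 else 0))"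
  unfolding partial_def by (rule theI'[OF ex1])

lemma d_der: "derivation K (d i)" using d_prop by blast
lemma d_x: "j < n \<Longrightarrow> d i (x j) = (if j = i then 1 else 0)" using d_prop by blast

lemma der_unique: "derivation K \<delta> \<Longrightarrow> derivation K \<delta>' \<Longrightarrow> (\<And>i. i < n \<Longrightarrow> \<delta> (x i) = \<delta>' (x i)) \<Longrightarrow> \<delta> = \<delta>'"
  using ex1[of "\<lambda>i. \<delta>' (x i)"] by metis

lemma d_add: "d i (a + b) = d i a + d i b" using derivation_add[OF d_der] .
lemma d_mult: "d i (a * b) = a * d i b + b * d i a" using derivation_mult[OF d_der] .
lemma d_cmult: "c \<in> K \<Longrightarrow> d i (c * a) = c * d i a" using derivation_cmult[OF d_der] .
lemma d_zero[simp]: "d i 0 = 0" using derivation_zero[OF d_der] .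
lemma d_one[simp]: "d i 1 = 0" using derivation_one[OF d_der] .
lemma d_uminus: "d i (- a) = - d i a" using derivation_uminus[OF d_der] .
lemma d_diff: "d i (a - b) = d i a - d i b" using derivation_diff[OF d_der] .
lemma d_sum: "d i (\<Sum>j\<in>A. f j) = (\<Sum>j\<in>A. d i (f j))" using derivation_sum[OF d_der] .
lemma d_K: "c \<in> K \<Longrightarrow> d i c = 0" using derivation_K[OF d_der] .

lemma d_comm: "d i (d j a) = d j (d i a)"
proof -
  define \<delta> where "\<delta> = (\<lambda>a. d i (d j a) - d j (d i a))"
  have der: "derivation K \<delta>"
    unfolding derivation_def \<delta>_def
  proof (intro conjI allI ballI)
    fix a b show "d i (d j (a + b)) - d j (d i (a + b)) = d i (d j a) - d j (d i a) + (d i (d j b) - d j (d i b))"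
      by (simp add: d_add)
    show "d i (d j (a * b)) - d j (d i (a * b)) = a * (d i (d j b) - d j (d i b)) + b * (d i (d j a) - d j (d i a))"
      by (simp add: d_add d_mult algebra_simps)
  next
    fix c a assume "c \<in> K" then show "d i (d j (c * a)) - d j (d i (c * a)) = c * (d i (d j a) - d j (d i a))"
      by (simp add: d_cmult right_diff_distrib)
  qed
  have "\<delta> = (\<lambda>a. 0)"
  proof (rule der_unique[OF der])
    show "derivation K (\<lambda>a. 0)" by (simp add: derivation_def)
    fix k assume "k < n" then show "\<delta> (x k) = 0" unfolding \<delta>_def by (simp add: d_x)
  qed
  then show ?thesis unfolding \<delta>_def by (metis (no_types) eq_iff_diff_eq_0)
qed

lemma der_repr:
  assumes "derivation K \<delta>" shows "\<delta> a = (\<Sum>i<n. \<delta> (x i) * d i a)"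
proof -
  define \<delta>' where "\<delta>' = (\<lambda>a. \<Sum>i<n. \<delta> (x i) * d i a)"
  have der: "derivation K \<delta>'"
    unfolding derivation_def \<delta>'_def
  proof (intro conjI allI ballI)
    fix a b show "(\<Sum>i<n. \<delta> (x i) * d i (a + b)) = (\<Sum>i<n. \<delta> (x i) * d i a) + (\<Sum>i<n. \<delta> (x i) * d i b)"
      by (simp add: d_add algebra_simps sum.distrib)
    show "(\<Sum>i<n. \<delta> (x i) * d i (a * b)) = a * (\<Sum>i<n. \<delta> (x i) * d i b) + b * (\<Sum>i<n. \<delta> (x i) * d i a)"
      by (simp add: d_mult algebra_simps sum.distrib sum_distrib_left)
  next
    fix c a assume "c \<in> K" then show "(\<Sum>i<n. \<delta> (x i) * d i (c * a)) = c * (\<Sum>i<n. \<delta> (x i) * d i a)"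
      by (simp add: d_cmult sum_distrib_left mult.left_commute)
  qed
  have "\<delta> = \<delta>'"
  proof (rule der_unique[OF assms der])
    fix k assume k: "k < n"
    have "\<delta>' (x k) = (\<Sum>i<n. if i = k then \<delta> (x i) else 0)"
      unfolding \<delta>'_def using k by (intro sum.cong) (auto simp: d_x)
    also have "\<dots> = \<delta> (x k)" using k by simp
    finally show "\<delta> (x k) = \<delta>' (x k)" by simp
  qed
  then show ?thesis unfolding \<delta>'_def by metis
qed

lemma in_K_if_d: assumes "\<And>i. i < n \<Longrightarrow> d i a = 0" shows "a \<in> K"
proof -
  have "\<forall>\<delta>. derivation K \<delta> \<longrightarrow> \<delta> a = 0"
  proof (intro allI impI)
    fix \<delta> assume "derivation K \<delta>" then show "\<delta> a = 0" using der_repr[of \<delta> a] assms by simp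
  qed
  then show ?thesis using kernel by blast
qed

lemma of_nat_K: "of_nat m \<in> K" using subfield_of_nat[OF sf] .

lemma d_of_nat[simp]: "d i (of_nat m) = 0" using d_K[OF of_nat_K] .

lemma d_of_nat_mult: "d i (of_nat m * a) = of_nat m * d i a" using d_cmult[OF of_nat_K] .

end


definition vmi :: "nat \<Rightarrow> (nat \<Rightarrow>\<^sub>0 nat) \<Rightarrow> bool" where
  "vmi n \<alpha> \<longleftrightarrow> Poly_Mapping.keys \<alpha> \<subseteq> {..<n}"

lemma total_deg_sum: "finite S \<Longrightarrow> Poly_Mapping.keys \<alpha> \<subseteq> S \<Longrightarrow> total_deg \<alpha> = (\<Sum>i\<in>S. Poly_Mapping.lookup \<alpha> i)"
  unfolding total_deg_def by (rule sum.mono_neutral_left) (auto simp: in_keys_iff)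

lemma total_deg_add[simp]: "total_deg (\<alpha> + \<beta>) = total_deg \<alpha> + total_deg \<beta>"
proof -
  let ?S = "Poly_Mapping.keys \<alpha> \<union> Poly_Mapping.keys \<beta>"
  have "total_deg (\<alpha> + \<beta>) = (\<Sum>i\<in>?S. Poly_Mapping.lookup (\<alpha> + \<beta>) i)"
    by (rule total_deg_sum) (use keys_add[of \<alpha> \<beta>] in auto)
  also have "\<dots> = (\<Sum>i\<in>?S. Poly_Mapping.lookup \<alpha> i) + (\<Sum>i\<in>?S. Poly_Mapping.lookup \<beta> i)"
    by (simp add: lookup_add sum.distrib)
  also have "\<dots> = total_deg \<alpha> + total_deg \<beta>"
    by (simp add: total_deg_sum[symmetric])
  finally show ?thesis .
qed

lemma total_deg_single[simp]: "total_deg (Poly_Mapping.single j k) = k"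
  unfolding total_deg_def by simp

lemma total_deg_zero[simp]: "total_deg 0 = 0"
  unfolding total_deg_def by simp

lemma total_deg_eq_0_iff: "total_deg \<alpha> = 0 \<longleftrightarrow> \<alpha> = 0"
proof
  assume "total_deg \<alpha> = 0"
  then have "\<forall>i\<in>Poly_Mapping.keys \<alpha>. Poly_Mapping.lookup \<alpha> i = 0"
    unfolding total_deg_def by simp
  then have "\<forall>i. Poly_Mapping.lookup \<alpha> i = 0" by (auto simp: in_keys_iff)
  then show "\<alpha> = 0" by (intro poly_mapping_eqI) simp
qed simp

lemma lookup_le_total_deg: "Poly_Mapping.lookup \<alpha> i \<le> total_deg \<alpha>"
proof (cases "i \<in> Poly_Mapping.keys \<alpha>")
  case True then show ?thesis unfolding total_deg_def
    by (intro member_le_sum) auto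
qed (simp add: in_keys_iff)

definition ej :: "nat \<Rightarrow> (nat \<Rightarrow>\<^sub>0 nat)" where "ej j = Poly_Mapping.single j 1"

lemma lookup_ej[simp]: "Poly_Mapping.lookup (ej j) i = (if i = j then 1 else 0)"
  unfolding ej_def by (simp add: lookup_single)

lemma keys_ej[simp]: "Poly_Mapping.keys (ej j) = {j}"
  unfolding ej_def by simp

lemma total_deg_ej[simp]: "total_deg (ej j) = 1"
  unfolding ej_def by simp

lemma ej_neq_0[simp]: "ej j \<noteq> 0"
  by (metis keys_ej keys_zero empty_not_insert)

lemma split_single:
  assumes "j \<in> Poly_Mapping.keys \<alpha>"
  shows "\<alpha> = (\<alpha> - ej j) + ej j"
proof (intro poly_mapping_eqI)
  fix i show "Poly_Mapping.lookup \<alpha> i = Poly_Mapping.lookup (\<alpha> - ej j + ej j) i"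
    using assms by (cases "i = j") (auto simp: lookup_add lookup_minus in_keys_iff)
qed

lemma keys_minus_single: "Poly_Mapping.keys (\<alpha> - ej j) \<subseteq> Poly_Mapping.keys \<alpha>"
  by (auto simp: in_keys_iff lookup_minus)

lemma vmi_add: "vmi n (\<alpha> + \<beta>) \<longleftrightarrow> vmi n \<alpha> \<and> vmi n \<beta>"
proof -
  have "Poly_Mapping.keys (\<alpha> + \<beta>) = Poly_Mapping.keys \<alpha> \<union> Poly_Mapping.keys \<beta>"
    by (auto simp: in_keys_iff lookup_add)
  then show ?thesis unfolding vmi_def by auto
qed

lemma vmi_single: "vmi n (ej j) \<longleftrightarrow> j < n"
  unfolding vmi_def by simp

lemma vmi_zero[simp]: "vmi n 0" unfolding vmi_def by simp

lemma vmi_minus: "vmi n \<alpha> \<Longrightarrow> vmi n (\<alpha> - ej j)"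
  unfolding vmi_def using keys_minus_single by blast

lemma vmi_induct[consumes 1, case_names zero step]:
  assumes "vmi n \<beta>" "P 0"
    "\<And>\<beta> j. j < n \<Longrightarrow> vmi n \<beta> \<Longrightarrow> P \<beta> \<Longrightarrow> P (\<beta> + ej j)"
  shows "P \<beta>"
  using assms(1)
proof (induction "total_deg \<beta>" arbitrary: \<beta> rule: less_induct)
  case (less \<beta>)
  show ?case
  proof (cases "\<beta> = 0")
    case True then show ?thesis using assms(2) by simp
  next
    case False
    then obtain j where j: "j \<in> Poly_Mapping.keys \<beta>"
      by (metis keys_zero lookup_zero not_in_keys_iff_lookup_eq_zero poly_mapping_eqI)
    define \<beta>' where "\<beta>' = \<beta> - ej j"
    have eq: "\<beta> = \<beta>' + ej j" unfolding \<beta>'_def by (rule split_single[OF j])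
    have v: "vmi n \<beta>'" unfolding \<beta>'_def using vmi_minus[OF less.prems] .
    have jn: "j < n" using less.prems j unfolding vmi_def by auto
    have "total_deg \<beta>' < total_deg \<beta>" using arg_cong[OF eq, of total_deg] by simp
    then have "P \<beta>'" using less.hyps v by blast
    then show ?thesis using assms(3)[OF jn v] eq by simp
  qed
qed

definition lin :: "'r::comm_ring_1 set \<Rightarrow> ('r \<Rightarrow> 'r) \<Rightarrow> bool" where
  "lin K L \<longleftrightarrow> (\<forall>a b. L (a + b) = L a + L b) \<and> (\<forall>c\<in>K. \<forall>a. L (c * a) = c * L a)"

lemma lin_add: "lin K L \<Longrightarrow> L (a + b) = L a + L b" unfolding lin_def by blast
lemma lin_cmult: "lin K L \<Longrightarrow> c \<in> K \<Longrightarrow> L (c * a) = c * L a" unfolding lin_def by blast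
lemma lin_zero: "lin K L \<Longrightarrow> L 0 = 0"
  using lin_add[of K L 0 0] by simp
lemma lin_uminus: "lin K L \<Longrightarrow> L (- a) = - L a"
  using lin_add[of K L a "-a"] lin_zero[of K L] by (simp add: eq_neg_iff_add_eq_0 add.commute)
lemma lin_diff: "lin K L \<Longrightarrow> L (a - b) = L a - L b"
  using lin_add[of K L a "-b"] lin_uminus[of K L b] by simp
lemma lin_sum: "lin K L \<Longrightarrow> L (\<Sum>i\<in>A. f i) = (\<Sum>i\<in>A. L (f i))"
  by (induction A rule: infinite_finite_induct) (auto simp: lin_zero lin_add)
lemma lin_id: "lin K id" unfolding lin_def by simp
lemma lin_comp: "lin K f \<Longrightarrow> lin K g \<Longrightarrow> lin K (f \<circ> g)" unfolding lin_def by simp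

context cs begin

abbreviation "dp \<equiv> dpow K n x"
abbreviation "vm \<equiv> vmi n"

lemma funpow_induct_aux: "\<Phi> id \<Longrightarrow> (\<And>f g. \<Phi> f \<Longrightarrow> \<Phi> g \<Longrightarrow> \<Phi> (f \<circ> g)) \<Longrightarrow> \<Phi> h \<Longrightarrow> \<Phi> (h ^^ k)"
  by (induction k) auto

definition dfold :: "(nat \<Rightarrow>\<^sub>0 nat) \<Rightarrow> nat list \<Rightarrow> 'r \<Rightarrow> 'r" where
  "dfold \<alpha> xs = foldr (\<lambda>i f. (d i ^^ Poly_Mapping.lookup \<alpha> i) \<circ> f) xs id"

lemma dfold_Nil: "dfold \<alpha> [] = id" unfolding dfold_def by simp
lemma dfold_Cons: "dfold \<alpha> (i # xs) = (d i ^^ Poly_Mapping.lookup \<alpha> i) \<circ> dfold \<alpha> xs"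
  unfolding dfold_def by simp
lemma dp_dfold: "dp \<alpha> = dfold \<alpha> [0..<n]" unfolding dpow_def dfold_def ..

lemma dpow_induct:
  assumes "\<Phi> id" "\<And>f g. \<Phi> f \<Longrightarrow> \<Phi> g \<Longrightarrow> \<Phi> (f \<circ> g)" "\<And>i. i < n \<Longrightarrow> \<Phi> (d i)"
  shows "\<Phi> (dp \<alpha>)"
proof -
  have H: "set xs \<subseteq> {..<n} \<Longrightarrow> \<Phi> (dfold \<alpha> xs)" for xs
  proof (induction xs)
    case Nil then show ?case using assms(1) by (simp only: dfold_Nil)
  next
    case (Cons i xs)
    then have "i < n" "\<Phi> (dfold \<alpha> xs)" by auto
    moreover have "\<Phi> (d i ^^ Poly_Mapping.lookup \<alpha> i)"
      by (rule funpow_induct_aux[where \<Phi>=\<Phi>, OF assms(1)]) (auto intro: assms(2,3) \<open>i < n\<close>)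
    ultimately show ?case using assms(2) by (simp only: dfold_Cons)
  qed
  show ?thesis unfolding dp_dfold by (rule H) auto
qed

lemma dpow_lin: "lin K (dp \<alpha>)"
  by (rule dpow_induct) (auto intro: lin_id lin_comp simp: lin_def d_add d_cmult)

lemma dp_add: "dp \<alpha> (a + b) = dp \<alpha> a + dp \<alpha> b" using lin_add[OF dpow_lin] .
lemma dp_zero[simp]: "dp \<alpha> 0 = 0" using lin_zero[OF dpow_lin] .
lemma dp_uminus: "dp \<alpha> (- a) = - dp \<alpha> a" using lin_uminus[OF dpow_lin] .
lemma dp_diff: "dp \<alpha> (a - b) = dp \<alpha> a - dp \<alpha> b" using lin_diff[OF dpow_lin] .
lemma dp_sum: "dp \<alpha> (\<Sum>i\<in>A. f i) = (\<Sum>i\<in>A. dp \<alpha> (f i))" using lin_sum[OF dpow_lin] .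
lemma dp_cmult: "c \<in> K \<Longrightarrow> dp \<alpha> (c * a) = c * dp \<alpha> a" using lin_cmult[OF dpow_lin] .

lemma dpow_comm_d: "d j \<circ> dp \<alpha> = dp \<alpha> \<circ> d j"
  by (rule dpow_induct[where \<Phi>="\<lambda>g. d j \<circ> g = g \<circ> d j"])
     (auto simp: fun_eq_iff d_comm)

lemma dpow_comm_d': "d j (dp \<alpha> f) = dp \<alpha> (d j f)"
  using dpow_comm_d[of j \<alpha>] by (simp add: fun_eq_iff)

lemma d_funpow_comm: "d j \<circ> (d i ^^ k) = (d i ^^ k) \<circ> d j"
  by (induction k) (auto simp: fun_eq_iff d_comm)

lemma dpow_zero: "dp 0 = id"
proof -
  have "dfold 0 xs = id" for xs
    by (induction xs) (simp_all add: dfold_Nil dfold_Cons)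
  then show ?thesis unfolding dp_dfold by simp
qed

lemma dpow_step: assumes "j < n" shows "dp (\<alpha> + ej j) = d j \<circ> dp \<alpha>"
proof -
  have "distinct xs \<Longrightarrow> dfold (\<alpha> + ej j) xs =
     (if j \<in> set xs then d j \<circ> dfold \<alpha> xs else dfold \<alpha> xs)" for xs
  proof (induction xs)
    case Nil then show ?case by (simp add: dfold_Nil)
  next
    case (Cons i xs)
    then have IH: "dfold (\<alpha> + ej j) xs =
     (if j \<in> set xs then d j \<circ> dfold \<alpha> xs else dfold \<alpha> xs)" and ni: "i \<notin> set xs" by auto
    show ?case
    proof (cases "i = j")
      case True
      then have "dfold (\<alpha> + ej j) (i # xs) = (d j ^^ Suc (Poly_Mapping.lookup \<alpha> j)) \<circ> dfold \<alpha> xs"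
        using IH ni by (simp add: dfold_Cons lookup_add)
      also have "\<dots> = d j \<circ> dfold \<alpha> (i # xs)" using True by (simp add: dfold_Cons comp_assoc)
      finally show ?thesis using True by simp
    next
      case False
      then have l: "Poly_Mapping.lookup (\<alpha> + ej j) i = Poly_Mapping.lookup \<alpha> i"
        by (simp add: lookup_add)
      show ?thesis
      proof (cases "j \<in> set xs")
        case True
        have "dfold (\<alpha> + ej j) (i # xs) = (d i ^^ Poly_Mapping.lookup \<alpha> i) \<circ> (d j \<circ> dfold \<alpha> xs)"
          using IH True by (simp only: dfold_Cons l if_True)
        also have "\<dots> = d j \<circ> dfold \<alpha> (i # xs)"
          using d_funpow_comm[where j=j and i=i and k="Poly_Mapping.lookup \<alpha> i"] by (simp only: dfold_Cons) (metis comp_assoc)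
        finally show ?thesis using True by simp
      next
        case False
        then show ?thesis using IH \<open>i \<noteq> j\<close> by (simp only: dfold_Cons l if_False) simp
      qed
    qed
  qed
  from this[of "[0..<n]"] assms show ?thesis unfolding dp_dfold by simp
qed

lemma dpow_add: "vm \<beta> \<Longrightarrow> dp (\<alpha> + \<beta>) = dp \<alpha> \<circ> dp \<beta>"
proof (induction \<beta> rule: vmi_induct)
  case zero then show ?case by (simp add: dpow_zero)
next
  case (step \<beta> j)
  have "dp (\<alpha> + (\<beta> + ej j)) = dp ((\<alpha> + \<beta>) + ej j)"
    by (simp add: add.assoc)
  also have "\<dots> = d j \<circ> (dp \<alpha> \<circ> dp \<beta>)" using step dpow_step[of j "\<alpha> + \<beta>"] by (simp add: comp_def)
  also have "\<dots> = d j \<circ> dp \<alpha> \<circ> dp \<beta>" by (simp add: comp_assoc)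
  also have "\<dots> = dp \<alpha> \<circ> d j \<circ> dp \<beta>" by (simp add: dpow_comm_d)
  also have "\<dots> = dp \<alpha> \<circ> dp (\<beta> + ej j)" using step dpow_step[of j \<beta>] by (simp add: comp_assoc)
  finally show ?case .
qed

lemma dpow_one: "vm \<alpha> \<Longrightarrow> \<alpha> \<noteq> 0 \<Longrightarrow> dp \<alpha> 1 = 0"
proof (induction \<alpha> rule: vmi_induct)
  case (step \<beta> j)
  show ?case
  proof (cases "\<beta> = 0")
    case True then show ?thesis using step dpow_step[of j 0] by (simp add: dpow_zero)
  next
    case False then show ?thesis using step dpow_step[of j \<beta>] by simp
  qed
qed simp

end


lemma valid_symbol_iff: "valid_symbol n c \<longleftrightarrow> (\<forall>\<alpha>\<in>Poly_Mapping.keys c. vmi n \<alpha>)"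
  unfolding valid_symbol_def vmi_def ..

lemma valid_add: "valid_symbol n c \<Longrightarrow> valid_symbol n c' \<Longrightarrow> valid_symbol n (c + c')"
  unfolding valid_symbol_def using keys_add[of c c'] by blast
lemma valid_uminus: "valid_symbol n c \<Longrightarrow> valid_symbol n (- c)"
  unfolding valid_symbol_def by (simp add: in_keys_iff)
lemma valid_diff: "valid_symbol n c \<Longrightarrow> valid_symbol n c' \<Longrightarrow> valid_symbol n (c - c')"
  using valid_add[of n c "- c'"] valid_uminus[of n c'] by simp
lemma valid_zero[simp]: "valid_symbol n 0"
  unfolding valid_symbol_def by simp
lemma valid_single: "vmi n \<alpha> \<Longrightarrow> valid_symbol n (Poly_Mapping.single \<alpha> a)"
  unfolding valid_symbol_def vmi_def by simp
lemma valid_sum: "(\<And>i. i \<in> A \<Longrightarrow> valid_symbol n (c i)) \<Longrightarrow> valid_symbol n (\<Sum>i\<in>A. c i)"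
  by (induction A rule: infinite_finite_induct) (auto intro: valid_add)

lemma lookup_pderiv_xi:
  "Poly_Mapping.lookup (pderiv_xi j c) \<beta> = of_nat (Poly_Mapping.lookup \<beta> j + 1) * Poly_Mapping.lookup c (\<beta> + ej j)"
proof -
  have "{\<beta>. of_nat (Poly_Mapping.lookup \<beta> j + 1) * Poly_Mapping.lookup c (\<beta> + ej j) \<noteq> 0}
      \<subseteq> (\<lambda>\<alpha>. \<alpha> - ej j) ` Poly_Mapping.keys c"
  proof
    fix \<beta> assume "\<beta> \<in> {\<beta>. of_nat (Poly_Mapping.lookup \<beta> j + 1) * Poly_Mapping.lookup c (\<beta> + ej j) \<noteq> 0}"
    then have "\<beta> + ej j \<in> Poly_Mapping.keys c" by (auto simp: in_keys_iff)
    moreover have "\<beta> = (\<beta> + ej j) - ej j" by simp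
    ultimately show "\<beta> \<in> (\<lambda>\<alpha>. \<alpha> - ej j) ` Poly_Mapping.keys c" by blast
  qed
  then have "finite {\<beta>. of_nat (Poly_Mapping.lookup \<beta> j + 1) * Poly_Mapping.lookup c (\<beta> + ej j) \<noteq> 0}"
    by (rule finite_subset) simp
  then show ?thesis unfolding pderiv_xi_def ej_def[symmetric] by simp
qed

lemma keys_pderiv_xi:
  "Poly_Mapping.keys (pderiv_xi j c) \<subseteq> (\<lambda>\<alpha>. \<alpha> - ej j) ` {\<alpha>\<in>Poly_Mapping.keys c. Poly_Mapping.lookup \<alpha> j > 0}"
proof
  fix \<beta> assume "\<beta> \<in> Poly_Mapping.keys (pderiv_xi j c)"
  then have "\<beta> + ej j \<in> Poly_Mapping.keys c" by (auto simp: in_keys_iff lookup_pderiv_xi)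
  moreover have "\<beta> = (\<beta> + ej j) - ej j" by simp
  moreover have "Poly_Mapping.lookup (\<beta> + ej j) j > 0" by (simp add: lookup_add)
  ultimately show "\<beta> \<in> (\<lambda>\<alpha>. \<alpha> - ej j) ` {\<alpha>\<in>Poly_Mapping.keys c. Poly_Mapping.lookup \<alpha> j > 0}" by blast
qed

lemma valid_pderiv: "valid_symbol n c \<Longrightarrow> valid_symbol n (pderiv_xi j c)"
  unfolding valid_symbol_iff using keys_pderiv_xi[of j c] vmi_minus by blast

lemma split_single': "Poly_Mapping.lookup \<alpha> j > 0 \<Longrightarrow> \<alpha> - ej j + ej j = \<alpha>"
  using split_single[of j \<alpha>] by (simp add: in_keys_iff)

context cs begin

abbreviation "op \<equiv> op_of K n x"
abbreviation "vs \<equiv> valid_symbol n"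

definition ol :: "nat \<Rightarrow> ('r \<Rightarrow> 'r) \<Rightarrow> bool" where
  "ol m L \<longleftrightarrow> (\<exists>c. vs c \<and> (\<forall>\<alpha>\<in>Poly_Mapping.keys c. total_deg \<alpha> < m) \<and> L = op c)"

lemma op_superset: "finite S \<Longrightarrow> Poly_Mapping.keys c \<subseteq> S \<Longrightarrow> op c f = (\<Sum>\<alpha>\<in>S. Poly_Mapping.lookup c \<alpha> * dp \<alpha> f)"
  unfolding op_of_def by (rule sum.mono_neutral_left) (auto simp: in_keys_iff)

lemma op_add: "op (c + c') f = op c f + op c' f"
proof -
  let ?S = "Poly_Mapping.keys c \<union> Poly_Mapping.keys c'"
  have "op (c + c') f = (\<Sum>\<alpha>\<in>?S. Poly_Mapping.lookup (c + c') \<alpha> * dp \<alpha> f)"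
    by (rule op_superset) (use keys_add[of c c'] in auto)
  also have "\<dots> = (\<Sum>\<alpha>\<in>?S. Poly_Mapping.lookup c \<alpha> * dp \<alpha> f) + (\<Sum>\<alpha>\<in>?S. Poly_Mapping.lookup c' \<alpha> * dp \<alpha> f)"
    by (simp add: lookup_add sum.distrib distrib_right)
  also have "\<dots> = op c f + op c' f" using op_superset[of ?S c f] op_superset[of ?S c' f] by simp
  finally show ?thesis .
qed

lemma op_zero[simp]: "op 0 f = 0" unfolding op_of_def by simp

lemma op_uminus: "op (- c) f = - op c f"
  using op_add[of c "- c" f] by (simp add: eq_neg_iff_add_eq_0 add.commute)

lemma op_diff: "op (c - c') f = op c f - op c' f"
  using op_add[of c "- c'" f] op_uminus[of c' f] by simp

lemma op_sum: "op (\<Sum>i\<in>A. c i) f = (\<Sum>i\<in>A. op (c i) f)"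
  by (induction A rule: infinite_finite_induct) (auto simp: op_add)

lemma op_single: "op (Poly_Mapping.single \<alpha> a) f = a * dp \<alpha> f"
  by (subst op_superset[of "{\<alpha>}"]) (auto simp: lookup_single)

lemma ol_of: "vs c \<Longrightarrow> (\<And>\<alpha>. \<alpha> \<in> Poly_Mapping.keys c \<Longrightarrow> total_deg \<alpha> < m) \<Longrightarrow> ol m (op c)"
  unfolding ol_def by blast

lemma ol_zero: "ol m (\<lambda>f. 0)"
  unfolding ol_def by (intro exI[of _ 0]) (auto simp: fun_eq_iff)

lemma ol_add: assumes "ol m A" "ol m B" shows "ol m (\<lambda>f. A f + B f)"
proof -
  obtain a b where a: "vs a" "\<forall>\<alpha>\<in>Poly_Mapping.keys a. total_deg \<alpha> < m" "A = op a"
    and b: "vs b" "\<forall>\<alpha>\<in>Poly_Mapping.keys b. total_deg \<alpha> < m" "B = op b"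
    using assms unfolding ol_def by blast
  show ?thesis unfolding ol_def
    by (intro exI[of _ "a + b"]) (use a b keys_add[of a b] in \<open>auto simp: valid_add op_add fun_eq_iff\<close>)
qed

lemma ol_uminus: assumes "ol m A" shows "ol m (\<lambda>f. - A f)"
proof -
  obtain a where a: "vs a" "\<forall>\<alpha>\<in>Poly_Mapping.keys a. total_deg \<alpha> < m" "A = op a"
    using assms unfolding ol_def by blast
  show ?thesis unfolding ol_def
    by (intro exI[of _ "- a"]) (use a in \<open>auto simp: valid_uminus op_uminus fun_eq_iff in_keys_iff\<close>)
qed

lemma ol_diff: "ol m A \<Longrightarrow> ol m B \<Longrightarrow> ol m (\<lambda>f. A f - B f)"
  using ol_add[of m A "\<lambda>f. - B f"] ol_uminus[of m B] by simp

lemma ol_sum: "(\<And>i. i \<in> I \<Longrightarrow> ol m (F i)) \<Longrightarrow> ol m (\<lambda>f. \<Sum>i\<in>I. F i f)"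
proof (induction I rule: infinite_finite_induct)
  case (insert i I)
  then show ?case using ol_add[of m "F i" "\<lambda>f. \<Sum>i\<in>I. F i f"] by simp
qed (auto intro: ol_zero)

lemma ol_cong: "ol m A \<Longrightarrow> (\<And>f. A f = B f) \<Longrightarrow> ol m B"
  by (metis ext)

lemma ol_term: "vm \<alpha> \<Longrightarrow> total_deg \<alpha> < m \<Longrightarrow> ol m (\<lambda>f. a * dp \<alpha> f)"
proof -
  assume a: "vm \<alpha>" "total_deg \<alpha> < m"
  have "ol m (op (Poly_Mapping.single \<alpha> a))" by (rule ol_of) (use a in \<open>auto simp: valid_single split: if_splits\<close>)
  then show ?thesis by (rule ol_cong) (simp add: op_single)
qed

lemma ol_mono: "ol m L \<Longrightarrow> m \<le> m' \<Longrightarrow> ol m' L"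
  unfolding ol_def using order_less_le_trans by blast

lemma ol_0: "ol 0 L \<Longrightarrow> L = (\<lambda>f. 0)"
  unfolding ol_def by (auto simp: op_of_def fun_eq_iff)

lemma ol_repr: "ol m L \<Longrightarrow> \<exists>c. vs c \<and> (\<forall>\<alpha>\<in>Poly_Mapping.keys c. total_deg \<alpha> < m) \<and>
   (\<forall>f. L f = (\<Sum>\<alpha>\<in>Poly_Mapping.keys c. Poly_Mapping.lookup c \<alpha> * dp \<alpha> f))"
  unfolding ol_def op_of_def by auto

lemma ol_scale: assumes "ol m L" shows "ol m (\<lambda>f. r * L f)"
proof -
  obtain c where c: "vs c" "\<forall>\<alpha>\<in>Poly_Mapping.keys c. total_deg \<alpha> < m"
     "\<And>f. L f = (\<Sum>\<alpha>\<in>Poly_Mapping.keys c. Poly_Mapping.lookup c \<alpha> * dp \<alpha> f)"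
    using ol_repr[OF assms] by blast
  have "ol m (\<lambda>f. \<Sum>\<alpha>\<in>Poly_Mapping.keys c. (r * Poly_Mapping.lookup c \<alpha>) * dp \<alpha> f)"
    using c(1,2) by (intro ol_sum ol_term) (auto simp: valid_symbol_iff)
  then show ?thesis by (rule ol_cong) (simp add: c(3) sum_distrib_left mult.assoc)
qed

lemma ol_d: assumes "ol m L" "i < n" shows "ol (Suc m) (\<lambda>f. d i (L f))"
proof -
  obtain c where c: "vs c" "\<forall>\<alpha>\<in>Poly_Mapping.keys c. total_deg \<alpha> < m"
     "\<And>f. L f = (\<Sum>\<alpha>\<in>Poly_Mapping.keys c. Poly_Mapping.lookup c \<alpha> * dp \<alpha> f)"
    using ol_repr[OF assms(1)] by blast
  have "ol (Suc m) (\<lambda>f. \<Sum>\<alpha>\<in>Poly_Mapping.keys c. Poly_Mapping.lookup c \<alpha> * dp (\<alpha> + ej i) f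
        + d i (Poly_Mapping.lookup c \<alpha>) * dp \<alpha> f)"
    using c(1,2) assms(2) by (intro ol_sum ol_add ol_term) (auto simp: valid_symbol_iff vmi_add vmi_single)
  then show ?thesis
    by (rule ol_cong) (simp add: c(3) d_sum d_mult dpow_step[OF assms(2)] algebra_simps)
qed

lemma ol_dp_left: assumes "ol m L" "vm \<beta>" shows "ol (m + total_deg \<beta>) (\<lambda>f. dp \<beta> (L f))"
  using assms(2)
proof (induction \<beta> rule: vmi_induct)
  case zero then show ?case using assms(1) by (simp add: dpow_zero)
next
  case (step \<beta> j)
  have "ol (Suc (m + total_deg \<beta>)) (\<lambda>f. d j (dp \<beta> (L f)))" by (rule ol_d[OF step(3,1)])
  moreover have "(\<lambda>f. dp (\<beta> + ej j) (L f)) = (\<lambda>f. d j (dp \<beta> (L f)))"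
    using dpow_step[OF step(1)] by simp
  ultimately show ?case by simp
qed

lemma ol_dp_right: assumes "ol m L" "vm \<beta>" shows "ol (m + total_deg \<beta>) (\<lambda>f. L (dp \<beta> f))"
proof -
  obtain c where c: "vs c" "\<forall>\<alpha>\<in>Poly_Mapping.keys c. total_deg \<alpha> < m"
     "\<And>f. L f = (\<Sum>\<alpha>\<in>Poly_Mapping.keys c. Poly_Mapping.lookup c \<alpha> * dp \<alpha> f)"
    using ol_repr[OF assms(1)] by blast
  have "ol (m + total_deg \<beta>) (\<lambda>f. \<Sum>\<alpha>\<in>Poly_Mapping.keys c. Poly_Mapping.lookup c \<alpha> * dp (\<alpha> + \<beta>) f)"
    using c(1,2) assms(2) by (intro ol_sum ol_term) (auto simp: valid_symbol_iff vmi_add)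
  then show ?thesis by (rule ol_cong) (simp add: c(3) dpow_add[OF assms(2)])
qed

end


context cs begin

lemma leibniz_x:
  assumes "vm \<alpha>" "j < n"
  shows "dp \<alpha> (x j * f) = x j * dp \<alpha> f + of_nat (Poly_Mapping.lookup \<alpha> j) * dp (\<alpha> - ej j) f"
  using assms(1)
proof (induction \<alpha> rule: vmi_induct)
  case zero then show ?case by (simp add: dpow_zero)
next
  case (step \<beta> k)
  have "dp (\<beta> + ej k) (x j * f) = d k (dp \<beta> (x j * f))" by (simp add: dpow_step[OF step(1)])
  also have "\<dots> = x j * d k (dp \<beta> f) + dp \<beta> f * d k (x j)
      + of_nat (Poly_Mapping.lookup \<beta> j) * d k (dp (\<beta> - ej j) f)"
    using step(3) by (simp add: d_add d_mult d_of_nat_mult)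
  also have "\<dots> = x j * dp (\<beta> + ej k) f + (if j = k then dp \<beta> f else 0)
      + of_nat (Poly_Mapping.lookup \<beta> j) * dp (\<beta> - ej j + ej k) f"
    using assms(2) step(1) by (simp add: d_x dpow_step)
  also have "\<dots> = x j * dp (\<beta> + ej k) f + of_nat (Poly_Mapping.lookup (\<beta> + ej k) j) * dp (\<beta> + ej k - ej j) f"
  proof (cases "j = k")
    case True
    show ?thesis
    proof (cases "Poly_Mapping.lookup \<beta> j > 0")
      case True
      then have "\<beta> - ej j + ej k = \<beta>" using \<open>j = k\<close> split_single' by simp
      then show ?thesis using \<open>j = k\<close> by (simp add: lookup_add algebra_simps)
    next
      case False
      then show ?thesis using \<open>j = k\<close> by (simp add: lookup_add)
    qed
  next
    case False
    have "\<beta> - ej j + ej k = \<beta> + ej k - ej j"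
      using False by (intro poly_mapping_eqI) (auto simp: lookup_add lookup_minus)
    then show ?thesis using False by (simp add: lookup_add)
  qed
  finally show ?case .
qed

lemma op_pderiv:
  "op (pderiv_xi j c) f = (\<Sum>\<alpha>\<in>Poly_Mapping.keys c. of_nat (Poly_Mapping.lookup \<alpha> j) * Poly_Mapping.lookup c \<alpha> * dp (\<alpha> - ej j) f)"
proof -
  let ?A = "{\<alpha>\<in>Poly_Mapping.keys c. Poly_Mapping.lookup \<alpha> j > 0}"
  have inj: "inj_on (\<lambda>\<alpha>. \<alpha> - ej j) ?A"
    by (intro inj_onI) (metis (no_types, lifting) mem_Collect_eq split_single')
  have "op (pderiv_xi j c) f = (\<Sum>\<beta>\<in>(\<lambda>\<alpha>. \<alpha> - ej j) ` ?A. Poly_Mapping.lookup (pderiv_xi j c) \<beta> * dp \<beta> f)"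
    by (rule op_superset) (auto intro: keys_pderiv_xi[THEN subsetD])
  also have "\<dots> = (\<Sum>\<alpha>\<in>?A. Poly_Mapping.lookup (pderiv_xi j c) (\<alpha> - ej j) * dp (\<alpha> - ej j) f)"
    by (rule sum.reindex[OF inj, unfolded comp_def])
  also have "\<dots> = (\<Sum>\<alpha>\<in>?A. of_nat (Poly_Mapping.lookup \<alpha> j) * Poly_Mapping.lookup c \<alpha> * dp (\<alpha> - ej j) f)"
  proof (rule sum.cong[OF refl])
    fix \<alpha> assume "\<alpha> \<in> ?A"
    then have p: "Poly_Mapping.lookup \<alpha> j > 0" by simp
    then have "Poly_Mapping.lookup (\<alpha> - ej j) j + 1 = Poly_Mapping.lookup \<alpha> j" by (simp add: lookup_minus)
    then show "Poly_Mapping.lookup (pderiv_xi j c) (\<alpha> - ej j) * dp (\<alpha> - ej j) f =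
       of_nat (Poly_Mapping.lookup \<alpha> j) * Poly_Mapping.lookup c \<alpha> * dp (\<alpha> - ej j) f"
      by (simp add: lookup_pderiv_xi split_single'[OF p])
  qed
  also have "\<dots> = (\<Sum>\<alpha>\<in>Poly_Mapping.keys c. of_nat (Poly_Mapping.lookup \<alpha> j) * Poly_Mapping.lookup c \<alpha> * dp (\<alpha> - ej j) f)"
    by (rule sum.mono_neutral_left) auto
  finally show ?thesis .
qed

lemma op_comm_x:
  assumes "vs c" "j < n"
  shows "op c (x j * f) = x j * op c f + op (pderiv_xi j c) f"
proof -
  have "op c (x j * f) = (\<Sum>\<alpha>\<in>Poly_Mapping.keys c. Poly_Mapping.lookup c \<alpha> *
     (x j * dp \<alpha> f + of_nat (Poly_Mapping.lookup \<alpha> j) * dp (\<alpha> - ej j) f))"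
    unfolding op_of_def using assms by (intro sum.cong refl) (auto simp: leibniz_x valid_symbol_iff)
  also have "\<dots> = x j * op c f + op (pderiv_xi j c) f"
    unfolding op_pderiv by (simp add: op_of_def algebra_simps sum.distrib sum_distrib_left)
  finally show ?thesis .
qed

lemma op_one: "op c 1 = Poly_Mapping.lookup c 0" if "vs c"
proof -
  have "op c 1 = (\<Sum>\<alpha>\<in>Poly_Mapping.keys c. if \<alpha> = 0 then Poly_Mapping.lookup c \<alpha> else 0)"
    unfolding op_of_def using that by (intro sum.cong refl) (auto simp: dpow_zero dpow_one valid_symbol_iff)
  also have "\<dots> = Poly_Mapping.lookup c 0"
    by (simp add: sum.delta in_keys_iff)
  finally show ?thesis .
qed

lemma unique_aux:
  "\<forall>c. vs c \<longrightarrow> op c = (\<lambda>f. 0) \<longrightarrow> (\<forall>\<gamma>. total_deg \<gamma> = m \<longrightarrow> Poly_Mapping.lookup c \<gamma> = 0)"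
proof (induction m)
  case 0
  show ?case
  proof (intro allI impI)
    fix c \<gamma> assume "vs c" "op c = (\<lambda>f. 0)" "total_deg \<gamma> = 0"
    then show "Poly_Mapping.lookup c \<gamma> = 0" using op_one[of c] by (simp add: total_deg_eq_0_iff fun_eq_iff)
  qed
next
  case (Suc m)
  show ?case
  proof (intro allI impI)
    fix c \<gamma> assume c: "vs c" "op c = (\<lambda>f. 0)" and g: "total_deg \<gamma> = Suc m"
    show "Poly_Mapping.lookup c \<gamma> = 0"
    proof (cases "vm \<gamma>")
      case False
      then show ?thesis using c(1) by (auto simp: valid_symbol_iff in_keys_iff)
    next
      case True
      have "\<gamma> \<noteq> 0" using g by auto
      then obtain j where j: "j \<in> Poly_Mapping.keys \<gamma>"
        by (metis keys_zero lookup_zero not_in_keys_iff_lookup_eq_zero poly_mapping_eqI)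
      then have jn: "j < n" using True unfolding vmi_def by auto
      define \<beta> where "\<beta> = \<gamma> - ej j"
      have eq: "\<gamma> = \<beta> + ej j" unfolding \<beta>_def by (rule split_single[OF j])
      have tb: "total_deg \<beta> = m" using arg_cong[OF eq, of total_deg] g by simp
      have vp: "vs (pderiv_xi j c)" using valid_pderiv[OF c(1)] .
      have "op (pderiv_xi j c) = (\<lambda>f. 0)"
        using op_comm_x[OF c(1) jn] c(2) by (auto simp: fun_eq_iff)
      then have "Poly_Mapping.lookup (pderiv_xi j c) \<beta> = 0" using Suc.IH vp tb by blast
      then have "of_nat (Poly_Mapping.lookup \<beta> j + 1) * Poly_Mapping.lookup c \<gamma> = 0"
        by (simp add: lookup_pderiv_xi eq)
      then show ?thesis by (rule subfield_of_nat_cancel[OF sf, rotated]) simp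
    qed
  qed
qed

lemma op_unique: "vs c \<Longrightarrow> op c = (\<lambda>f. 0) \<Longrightarrow> c = 0"
  using unique_aux by (intro poly_mapping_eqI) auto

lemma op_inj: "vs c \<Longrightarrow> vs c' \<Longrightarrow> op c = op c' \<Longrightarrow> c = c'"
  using op_unique[of "c - c'"] by (auto simp: valid_diff op_diff fun_eq_iff)

lemma full_symbol_op: "vs c \<Longrightarrow> full_symbol K n x (op c) = c"
  unfolding full_symbol_def by (rule the_equality) (auto intro: op_inj)

lemma ol_coeff:
  assumes "vs C" "ol m (op C)" "total_deg \<gamma> \<ge> m"
  shows "Poly_Mapping.lookup C \<gamma> = 0"
proof -
  obtain e where e: "vs e" "\<forall>\<alpha>\<in>Poly_Mapping.keys e. total_deg \<alpha> < m" "op C = op e"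
    using assms(2) unfolding ol_def by blast
  have "C = e" using op_inj[OF assms(1) e(1) e(3)] .
  then show ?thesis using e(2) assms(3) by (metis in_keys_iff not_le)
qed

end


lemma lookup_mult_fin:
  "Poly_Mapping.lookup (f * g) \<gamma> = (\<Sum>l\<in>Poly_Mapping.keys f. \<Sum>r\<in>Poly_Mapping.keys g.
      if \<gamma> = l + r then Poly_Mapping.lookup f l * Poly_Mapping.lookup g r else (0::'a::comm_ring_1))"
proof -
  have inner: "(\<Sum>q. Poly_Mapping.lookup g q when \<gamma> = l + q) =
      (\<Sum>r\<in>Poly_Mapping.keys g. Poly_Mapping.lookup g r when \<gamma> = l + r)" for l
    by (rule Sum_any.expand_superset) (auto simp: in_keys_iff)
  have "Poly_Mapping.lookup (f * g) \<gamma> = (\<Sum>l. Poly_Mapping.lookup f l * (\<Sum>r\<in>Poly_Mapping.keys g. Poly_Mapping.lookup g r when \<gamma> = l + r))"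
    by (simp add: lookup_mult inner)
  also have "\<dots> = (\<Sum>l\<in>Poly_Mapping.keys f. Poly_Mapping.lookup f l * (\<Sum>r\<in>Poly_Mapping.keys g. Poly_Mapping.lookup g r when \<gamma> = l + r))"
    by (rule Sum_any.expand_superset) (auto simp: in_keys_iff)
  also have "\<dots> = (\<Sum>l\<in>Poly_Mapping.keys f. \<Sum>r\<in>Poly_Mapping.keys g.
      if \<gamma> = l + r then Poly_Mapping.lookup f l * Poly_Mapping.lookup g r else 0)"
    by (auto simp: sum_distrib_left when_def intro!: sum.cong)
  finally show ?thesis .
qed

context cs begin

lemma leibniz:
  assumes "vm \<alpha>"
  shows "ol (total_deg \<alpha> - 1) (\<lambda>f. dp \<alpha> (b * f) - b * dp \<alpha> f
     - (\<Sum>j<n. of_nat (Poly_Mapping.lookup \<alpha> j) * d j b * dp (\<alpha> - ej j) f))"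
  using assms
proof (induction \<alpha> rule: vmi_induct)
  case zero
  show ?case by (rule ol_cong[OF ol_zero]) (simp add: dpow_zero)
next
  case (step \<beta> k)
  define S where "S = (\<lambda>f. \<Sum>j<n. of_nat (Poly_Mapping.lookup \<beta> j) * d j b * dp (\<beta> - ej j) f)"
  define E where "E = (\<lambda>f. dp \<beta> (b * f) - b * dp \<beta> f - S f)"
  define A where "A = (\<lambda>f. \<Sum>j<n. (of_nat (Poly_Mapping.lookup \<beta> j) * d k (d j b)) * dp (\<beta> - ej j) f)"
  have IH: "ol (total_deg \<beta> - 1) E" using step(3) unfolding E_def S_def .
  have dk: "d k (dp \<gamma> g) = dp (\<gamma> + ej k) g" for \<gamma> g using dpow_step[OF step(1)] by simp
  have olA: "ol (total_deg \<beta>) A" unfolding A_def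
  proof (intro ol_sum)
    fix j assume "j \<in> {..<n}"
    show "ol (total_deg \<beta>) (\<lambda>f. (of_nat (Poly_Mapping.lookup \<beta> j) * d k (d j b)) * dp (\<beta> - ej j) f)"
    proof (cases "Poly_Mapping.lookup \<beta> j > 0")
      case True
      have "total_deg (\<beta> - ej j) < total_deg \<beta>"
        using arg_cong[OF split_single'[OF True], of total_deg] by simp
      then show ?thesis by (intro ol_term vmi_minus step(2))
    qed (simp add: ol_zero)
  qed
  have olB: "ol (total_deg \<beta>) (\<lambda>f. d k (E f))"
  proof (cases "total_deg \<beta> = 0")
    case True
    then have "E = (\<lambda>f. 0)" using IH ol_0 by simp
    then show ?thesis by (simp add: ol_zero)
  next
    case False
    then show ?thesis using ol_d[OF IH step(1)] by simp
  qed
  have Z: "(\<Sum>j<n. of_nat (Poly_Mapping.lookup (\<beta> + ej k) j) * d j b * dp (\<beta> + ej k - ej j) f)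
     = dp \<beta> f * d k b + (\<Sum>j<n. of_nat (Poly_Mapping.lookup \<beta> j) * d j b * dp (\<beta> - ej j + ej k) f)" for f
  proof -
    have "(\<Sum>j<n. of_nat (Poly_Mapping.lookup (\<beta> + ej k) j) * d j b * dp (\<beta> + ej k - ej j) f)
      = (\<Sum>j<n. (if j = k then dp \<beta> f * d k b else 0) + of_nat (Poly_Mapping.lookup \<beta> j) * d j b * dp (\<beta> - ej j + ej k) f)"
    proof (rule sum.cong[OF refl])
      fix j assume "j \<in> {..<n}"
      show "of_nat (Poly_Mapping.lookup (\<beta> + ej k) j) * d j b * dp (\<beta> + ej k - ej j) f =
         (if j = k then dp \<beta> f * d k b else 0) + of_nat (Poly_Mapping.lookup \<beta> j) * d j b * dp (\<beta> - ej j + ej k) f"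
      proof (cases "j = k")
        case True
        show ?thesis
        proof (cases "Poly_Mapping.lookup \<beta> j > 0")
          case True
          then have "\<beta> - ej j + ej k = \<beta>" using \<open>j = k\<close> split_single' by simp
          then show ?thesis using \<open>j = k\<close> by (simp add: lookup_add algebra_simps)
        next
          case False
          then show ?thesis using \<open>j = k\<close> by (simp add: lookup_add)
        qed
      next
        case False
        have "\<beta> - ej j + ej k = \<beta> + ej k - ej j"
          using False by (intro poly_mapping_eqI) (auto simp: lookup_add lookup_minus)
        then show ?thesis using False by (simp add: lookup_add)
      qed
    qed
    also have "\<dots> = dp \<beta> f * d k b + (\<Sum>j<n. of_nat (Poly_Mapping.lookup \<beta> j) * d j b * dp (\<beta> - ej j + ej k) f)"
      using step(1) by (simp add: sum.distrib)
    finally show ?thesis .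
  qed
  have dS: "d k (S f) = (\<Sum>j<n. of_nat (Poly_Mapping.lookup \<beta> j) * d j b * dp (\<beta> - ej j + ej k) f) + A f" for f
    unfolding S_def A_def by (simp add: d_sum d_mult d_of_nat_mult dk algebra_simps sum.distrib)
  show ?case
  proof (rule ol_cong[where A="\<lambda>f. A f + d k (E f)"])
    show "ol (total_deg (\<beta> + ej k) - 1) (\<lambda>f. A f + d k (E f))"
      using ol_add[OF olA olB] by simp
  next
    fix f
    have "dp (\<beta> + ej k) (b * f) = d k (b * dp \<beta> f + S f + E f)"
      by (simp add: dpow_step[OF step(1)] E_def)
    also have "\<dots> = b * dp (\<beta> + ej k) f + dp \<beta> f * d k b + d k (S f) + d k (E f)"
      by (simp add: d_add d_mult dk)
    finally have "dp (\<beta> + ej k) (b * f) = b * dp (\<beta> + ej k) f + dp \<beta> f * d k b + d k (S f) + d k (E f)" .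
    then show "A f + d k (E f) = dp (\<beta> + ej k) (b * f) - b * dp (\<beta> + ej k) f -
         (\<Sum>j<n. of_nat (Poly_Mapping.lookup (\<beta> + ej k) j) * d j b * dp (\<beta> + ej k - ej j) f)"
      unfolding Z dS by simp
  qed
qed

end


context cs begin

definition Dm :: "nat \<Rightarrow> ((nat \<Rightarrow>\<^sub>0 nat) \<Rightarrow>\<^sub>0 'r) \<Rightarrow> ((nat \<Rightarrow>\<^sub>0 nat) \<Rightarrow>\<^sub>0 'r)" where
  "Dm j c = Abs_poly_mapping (\<lambda>\<alpha>. d j (Poly_Mapping.lookup c \<alpha>))"

lemma lookup_Dm: "Poly_Mapping.lookup (Dm j c) \<alpha> = d j (Poly_Mapping.lookup c \<alpha>)"
proof -
  have "{\<alpha>. d j (Poly_Mapping.lookup c \<alpha>) \<noteq> 0} \<subseteq> Poly_Mapping.keys c"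
    by (auto simp: in_keys_iff)
  then have "finite {\<alpha>. d j (Poly_Mapping.lookup c \<alpha>) \<noteq> 0}" by (rule finite_subset) simp
  then show ?thesis unfolding Dm_def by simp
qed

lemma keys_Dm: "Poly_Mapping.keys (Dm j c) \<subseteq> Poly_Mapping.keys c"
  by (auto simp: in_keys_iff lookup_Dm)

lemma valid_Dm: "vs c \<Longrightarrow> vs (Dm j c)"
  unfolding valid_symbol_def using keys_Dm by blast

lemma op_mult:
  "op (f * g) h = (\<Sum>l\<in>Poly_Mapping.keys f. \<Sum>r\<in>Poly_Mapping.keys g.
      Poly_Mapping.lookup f l * Poly_Mapping.lookup g r * dp (l + r) h)"
proof -
  define S where "S = (\<lambda>(l, r). l + r) ` (Poly_Mapping.keys f \<times> Poly_Mapping.keys g)"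
  have fS: "finite S" unfolding S_def by simp
  have kS: "Poly_Mapping.keys (f * g) \<subseteq> S" unfolding S_def using keys_mult[of f g] by auto
  have "op (f * g) h = (\<Sum>\<gamma>\<in>S. Poly_Mapping.lookup (f * g) \<gamma> * dp \<gamma> h)"
    by (rule op_superset[OF fS kS])
  also have "\<dots> = (\<Sum>\<gamma>\<in>S. \<Sum>l\<in>Poly_Mapping.keys f. \<Sum>r\<in>Poly_Mapping.keys g.
      (if \<gamma> = l + r then Poly_Mapping.lookup f l * Poly_Mapping.lookup g r * dp \<gamma> h else 0))"
    unfolding lookup_mult_fin sum_distrib_right by (intro sum.cong refl) auto
  also have "\<dots> = (\<Sum>l\<in>Poly_Mapping.keys f. \<Sum>r\<in>Poly_Mapping.keys g. \<Sum>\<gamma>\<in>S.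
      (if \<gamma> = l + r then Poly_Mapping.lookup f l * Poly_Mapping.lookup g r * dp \<gamma> h else 0))"
    by (subst sum.swap) (subst (2) sum.swap, rule refl)
  also have "\<dots> = (\<Sum>l\<in>Poly_Mapping.keys f. \<Sum>r\<in>Poly_Mapping.keys g.
      Poly_Mapping.lookup f l * Poly_Mapping.lookup g r * dp (l + r) h)"
  proof (intro sum.cong refl)
    fix l r assume "l \<in> Poly_Mapping.keys f" "r \<in> Poly_Mapping.keys g"
    then have "l + r \<in> S" unfolding S_def by auto
    then show "(\<Sum>\<gamma>\<in>S. (if \<gamma> = l + r then Poly_Mapping.lookup f l * Poly_Mapping.lookup g r * dp \<gamma> h else 0))
      = Poly_Mapping.lookup f l * Poly_Mapping.lookup g r * dp (l + r) h"
      using fS by (simp add: sum.delta')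
  qed
  finally show ?thesis .
qed

lemma sum_pderiv:
  "(\<Sum>l\<in>Poly_Mapping.keys (pderiv_xi j c). Poly_Mapping.lookup (pderiv_xi j c) l * \<Phi> l) =
   (\<Sum>\<alpha>\<in>Poly_Mapping.keys c. of_nat (Poly_Mapping.lookup \<alpha> j) * Poly_Mapping.lookup c \<alpha> * \<Phi> (\<alpha> - ej j))"
proof -
  let ?A = "{\<alpha>\<in>Poly_Mapping.keys c. Poly_Mapping.lookup \<alpha> j > 0}"
  have inj: "inj_on (\<lambda>\<alpha>. \<alpha> - ej j) ?A"
    by (intro inj_onI) (metis (no_types, lifting) mem_Collect_eq split_single')
  have "(\<Sum>l\<in>Poly_Mapping.keys (pderiv_xi j c). Poly_Mapping.lookup (pderiv_xi j c) l * \<Phi> l)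
     = (\<Sum>\<beta>\<in>(\<lambda>\<alpha>. \<alpha> - ej j) ` ?A. Poly_Mapping.lookup (pderiv_xi j c) \<beta> * \<Phi> \<beta>)"
    by (rule sum.mono_neutral_left) (simp, rule keys_pderiv_xi, auto simp: in_keys_iff)
  also have "\<dots> = (\<Sum>\<alpha>\<in>?A. Poly_Mapping.lookup (pderiv_xi j c) (\<alpha> - ej j) * \<Phi> (\<alpha> - ej j))"
    by (rule sum.reindex[OF inj, unfolded comp_def])
  also have "\<dots> = (\<Sum>\<alpha>\<in>?A. of_nat (Poly_Mapping.lookup \<alpha> j) * Poly_Mapping.lookup c \<alpha> * \<Phi> (\<alpha> - ej j))"
  proof (rule sum.cong[OF refl])
    fix \<alpha> assume "\<alpha> \<in> ?A"
    then have p: "Poly_Mapping.lookup \<alpha> j > 0" by simp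
    then have "Poly_Mapping.lookup (\<alpha> - ej j) j + 1 = Poly_Mapping.lookup \<alpha> j" by (simp add: lookup_minus)
    then show "Poly_Mapping.lookup (pderiv_xi j c) (\<alpha> - ej j) * \<Phi> (\<alpha> - ej j) =
       of_nat (Poly_Mapping.lookup \<alpha> j) * Poly_Mapping.lookup c \<alpha> * \<Phi> (\<alpha> - ej j)"
      by (simp add: lookup_pderiv_xi split_single'[OF p])
  qed
  also have "\<dots> = (\<Sum>\<alpha>\<in>Poly_Mapping.keys c. of_nat (Poly_Mapping.lookup \<alpha> j) * Poly_Mapping.lookup c \<alpha> * \<Phi> (\<alpha> - ej j))"
    by (rule sum.mono_neutral_left) auto
  finally show ?thesis .
qed

lemma sum_Dm:
  "(\<Sum>r\<in>Poly_Mapping.keys (Dm j c). Poly_Mapping.lookup (Dm j c) r * \<Psi> r) =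
   (\<Sum>r\<in>Poly_Mapping.keys c. d j (Poly_Mapping.lookup c r) * \<Psi> r)"
  by (rule sum.mono_neutral_cong_left) (auto simp: keys_Dm in_keys_iff lookup_Dm)

lemma op_pd_Dm:
  "op (pderiv_xi j p * Dm j q) h = (\<Sum>\<alpha>\<in>Poly_Mapping.keys p. \<Sum>\<beta>\<in>Poly_Mapping.keys q.
     of_nat (Poly_Mapping.lookup \<alpha> j) * Poly_Mapping.lookup p \<alpha> * d j (Poly_Mapping.lookup q \<beta>) * dp (\<alpha> - ej j + \<beta>) h)"
proof -
  have "op (pderiv_xi j p * Dm j q) h = (\<Sum>l\<in>Poly_Mapping.keys (pderiv_xi j p). Poly_Mapping.lookup (pderiv_xi j p) l *
      (\<Sum>r\<in>Poly_Mapping.keys (Dm j q). Poly_Mapping.lookup (Dm j q) r * dp (l + r) h))"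
    unfolding op_mult by (simp add: sum_distrib_left mult.assoc)
  also have "\<dots> = (\<Sum>l\<in>Poly_Mapping.keys (pderiv_xi j p). Poly_Mapping.lookup (pderiv_xi j p) l *
      (\<Sum>r\<in>Poly_Mapping.keys q. d j (Poly_Mapping.lookup q r) * dp (l + r) h))"
    by (simp only: sum_Dm)
  also have "\<dots> = (\<Sum>\<alpha>\<in>Poly_Mapping.keys p. of_nat (Poly_Mapping.lookup \<alpha> j) * Poly_Mapping.lookup p \<alpha> *
      (\<Sum>r\<in>Poly_Mapping.keys q. d j (Poly_Mapping.lookup q r) * dp (\<alpha> - ej j + r) h))"
    by (rule sum_pderiv)
  also have "\<dots> = (\<Sum>\<alpha>\<in>Poly_Mapping.keys p. \<Sum>\<beta>\<in>Poly_Mapping.keys q.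
     of_nat (Poly_Mapping.lookup \<alpha> j) * Poly_Mapping.lookup p \<alpha> * d j (Poly_Mapping.lookup q \<beta>) * dp (\<alpha> - ej j + \<beta>) h)"
    by (simp add: sum_distrib_left mult.assoc)
  finally show ?thesis .
qed

definition LT :: "((nat \<Rightarrow>\<^sub>0 nat) \<Rightarrow>\<^sub>0 'r) \<Rightarrow> 'r \<Rightarrow> 'r \<Rightarrow> 'r" where
  "LT p r g = (\<Sum>j<n. \<Sum>\<alpha>\<in>Poly_Mapping.keys p. of_nat (Poly_Mapping.lookup \<alpha> j) * Poly_Mapping.lookup p \<alpha> * d j r * dp (\<alpha> - ej j) g)"

lemma op_leib:
  assumes "vs p" "\<And>\<alpha>. \<alpha> \<in> Poly_Mapping.keys p \<Longrightarrow> total_deg \<alpha> \<le> a"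
  shows "ol (a - 1) (\<lambda>g. op p (r * g) - r * op p g - LT p r g)"
proof -
  define E where "E = (\<lambda>\<alpha> g. dp \<alpha> (r * g) - r * dp \<alpha> g
     - (\<Sum>j<n. of_nat (Poly_Mapping.lookup \<alpha> j) * d j r * dp (\<alpha> - ej j) g))"
  have "ol (a - 1) (\<lambda>g. \<Sum>\<alpha>\<in>Poly_Mapping.keys p. Poly_Mapping.lookup p \<alpha> * E \<alpha> g)"
  proof (intro ol_sum ol_scale)
    fix \<alpha> assume a: "\<alpha> \<in> Poly_Mapping.keys p"
    have "ol (total_deg \<alpha> - 1) (E \<alpha>)" unfolding E_def
      by (rule leibniz) (use assms(1) a in \<open>auto simp: valid_symbol_iff\<close>)
    then show "ol (a - 1) (E \<alpha>)" by (rule ol_mono) (use assms(2)[OF a] in auto)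
  qed
  then show ?thesis
  proof (rule ol_cong)
    fix g
    show "(\<Sum>\<alpha>\<in>Poly_Mapping.keys p. Poly_Mapping.lookup p \<alpha> * E \<alpha> g) = op p (r * g) - r * op p g - LT p r g"
      unfolding E_def op_of_def LT_def
      by (simp add: algebra_simps sum_subtractf sum.distrib sum_distrib_left sum.swap[of _ "{..<n}"])
  qed
qed

lemma op_sum_arg: "op c (\<Sum>i\<in>A. g i) = (\<Sum>i\<in>A. op c (g i))"
  unfolding op_of_def by (simp add: dp_sum sum_distrib_left sum.swap[of _ A])

lemma LT_sum:
  assumes "vs q"
  shows "(\<Sum>\<beta>\<in>Poly_Mapping.keys q. LT p (Poly_Mapping.lookup q \<beta>) (dp \<beta> f)) = (\<Sum>j<n. op (pderiv_xi j p * Dm j q) f)"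
proof -
  have "(\<Sum>\<beta>\<in>Poly_Mapping.keys q. LT p (Poly_Mapping.lookup q \<beta>) (dp \<beta> f)) =
     (\<Sum>\<beta>\<in>Poly_Mapping.keys q. \<Sum>j<n. \<Sum>\<alpha>\<in>Poly_Mapping.keys p. of_nat (Poly_Mapping.lookup \<alpha> j) * Poly_Mapping.lookup p \<alpha> *
        d j (Poly_Mapping.lookup q \<beta>) * dp (\<alpha> - ej j + \<beta>) f)"
    unfolding LT_def using assms
    by (intro sum.cong refl) (auto simp: dpow_add valid_symbol_iff)
  also have "\<dots> = (\<Sum>j<n. \<Sum>\<alpha>\<in>Poly_Mapping.keys p. \<Sum>\<beta>\<in>Poly_Mapping.keys q. of_nat (Poly_Mapping.lookup \<alpha> j) * Poly_Mapping.lookup p \<alpha> *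
        d j (Poly_Mapping.lookup q \<beta>) * dp (\<alpha> - ej j + \<beta>) f)"
    by (subst sum.swap) (subst (2) sum.swap, rule refl)
  also have "\<dots> = (\<Sum>j<n. op (pderiv_xi j p * Dm j q) f)"
    by (simp add: op_pd_Dm)
  finally show ?thesis .
qed

end


context cs begin

definition Cm :: "((nat \<Rightarrow>\<^sub>0 nat) \<Rightarrow>\<^sub>0 'r) \<Rightarrow> ((nat \<Rightarrow>\<^sub>0 nat) \<Rightarrow>\<^sub>0 'r) \<Rightarrow> ((nat \<Rightarrow>\<^sub>0 nat) \<Rightarrow>\<^sub>0 'r)" where
  "Cm p q = (\<Sum>j<n. pderiv_xi j p * Dm j q - pderiv_xi j q * Dm j p)"

lemma comm_formula:
  assumes vp: "vs p" and vq: "vs q"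
    and dpa: "\<And>\<alpha>. \<alpha> \<in> Poly_Mapping.keys p \<Longrightarrow> total_deg \<alpha> \<le> a"
    and dqb: "\<And>\<beta>. \<beta> \<in> Poly_Mapping.keys q \<Longrightarrow> total_deg \<beta> \<le> b"
    and a1: "a \<ge> 1"
  shows "ol (a + b - 1) (\<lambda>f. op p (op q f) - op q (op p f) - op (Cm p q) f)"
proof -
  define Rp where "Rp = (\<lambda>r g. op p (r * g) - r * op p g - LT p r g)"
  define Rq where "Rq = (\<lambda>r g. op q (r * g) - r * op q g - LT q r g)"
  have olRp: "ol (a - 1) (Rp r)" for r unfolding Rp_def by (rule op_leib[OF vp dpa])
  have olRq: "ol (b - 1) (Rq r)" for r unfolding Rq_def by (rule op_leib[OF vq dqb])
  have ol1: "ol (a + b - 1) (\<lambda>f. \<Sum>\<beta>\<in>Poly_Mapping.keys q. Rp (Poly_Mapping.lookup q \<beta>) (dp \<beta> f))"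
  proof (intro ol_sum)
    fix \<beta> assume b: "\<beta> \<in> Poly_Mapping.keys q"
    have "ol (a - 1 + total_deg \<beta>) (\<lambda>f. Rp (Poly_Mapping.lookup q \<beta>) (dp \<beta> f))"
      by (rule ol_dp_right[OF olRp]) (use vq b in \<open>auto simp: valid_symbol_iff\<close>)
    then show "ol (a + b - 1) (\<lambda>f. Rp (Poly_Mapping.lookup q \<beta>) (dp \<beta> f))"
      by (rule ol_mono) (use dqb[OF b] a1 in auto)
  qed
  have ol2: "ol (a + b - 1) (\<lambda>f. \<Sum>\<alpha>\<in>Poly_Mapping.keys p. Rq (Poly_Mapping.lookup p \<alpha>) (dp \<alpha> f))"
  proof (intro ol_sum)
    fix \<alpha> assume al: "\<alpha> \<in> Poly_Mapping.keys p"
    show "ol (a + b - 1) (\<lambda>f. Rq (Poly_Mapping.lookup p \<alpha>) (dp \<alpha> f))"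
    proof (cases "b = 0")
      case True
      then have "Rq (Poly_Mapping.lookup p \<alpha>) = (\<lambda>f. 0)" using olRq ol_0 by simp
      then show ?thesis by (simp add: ol_zero)
    next
      case False
      have "ol (b - 1 + total_deg \<alpha>) (\<lambda>f. Rq (Poly_Mapping.lookup p \<alpha>) (dp \<alpha> f))"
        by (rule ol_dp_right[OF olRq]) (use vp al in \<open>auto simp: valid_symbol_iff\<close>)
      then show ?thesis by (rule ol_mono) (use dpa[OF al] False in auto)
    qed
  qed
  show ?thesis
  proof (rule ol_cong[OF ol_diff[OF ol1 ol2]])
    fix f
    have e1: "op p (op q f) = (\<Sum>\<beta>\<in>Poly_Mapping.keys q. Poly_Mapping.lookup q \<beta> * op p (dp \<beta> f)
       + LT p (Poly_Mapping.lookup q \<beta>) (dp \<beta> f) + Rp (Poly_Mapping.lookup q \<beta>) (dp \<beta> f))"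
      unfolding op_of_def[of K n x q] op_sum_arg Rp_def by simp
    have e2: "op q (op p f) = (\<Sum>\<alpha>\<in>Poly_Mapping.keys p. Poly_Mapping.lookup p \<alpha> * op q (dp \<alpha> f)
       + LT q (Poly_Mapping.lookup p \<alpha>) (dp \<alpha> f) + Rq (Poly_Mapping.lookup p \<alpha>) (dp \<alpha> f))"
      unfolding op_of_def[of K n x p] op_sum_arg Rq_def by simp
    have X1: "(\<Sum>\<beta>\<in>Poly_Mapping.keys q. Poly_Mapping.lookup q \<beta> * op p (dp \<beta> f)) =
       (\<Sum>\<alpha>\<in>Poly_Mapping.keys p. Poly_Mapping.lookup p \<alpha> * op q (dp \<alpha> f))"
    proof -
      have "(\<Sum>\<beta>\<in>Poly_Mapping.keys q. Poly_Mapping.lookup q \<beta> * op p (dp \<beta> f)) =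
         (\<Sum>\<beta>\<in>Poly_Mapping.keys q. \<Sum>\<alpha>\<in>Poly_Mapping.keys p. Poly_Mapping.lookup q \<beta> * Poly_Mapping.lookup p \<alpha> * dp (\<alpha> + \<beta>) f)"
        unfolding op_of_def using vq by (intro sum.cong refl) (auto simp: sum_distrib_left dpow_add valid_symbol_iff mult.assoc)
      also have "\<dots> = (\<Sum>\<alpha>\<in>Poly_Mapping.keys p. \<Sum>\<beta>\<in>Poly_Mapping.keys q. Poly_Mapping.lookup p \<alpha> * Poly_Mapping.lookup q \<beta> * dp (\<beta> + \<alpha>) f)"
        by (subst sum.swap) (simp add: add.commute mult.commute)
      also have "\<dots> = (\<Sum>\<alpha>\<in>Poly_Mapping.keys p. Poly_Mapping.lookup p \<alpha> * op q (dp \<alpha> f))"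
        unfolding op_of_def using vp by (intro sum.cong refl) (auto simp: sum_distrib_left dpow_add valid_symbol_iff mult.assoc)
      finally show ?thesis .
    qed
    have eC: "op (Cm p q) f = (\<Sum>j<n. op (pderiv_xi j p * Dm j q) f) - (\<Sum>j<n. op (pderiv_xi j q * Dm j p) f)"
      unfolding Cm_def op_sum op_diff by (simp add: sum_subtractf)
    show "(\<Sum>\<beta>\<in>Poly_Mapping.keys q. Rp (Poly_Mapping.lookup q \<beta>) (dp \<beta> f)) -
          (\<Sum>\<alpha>\<in>Poly_Mapping.keys p. Rq (Poly_Mapping.lookup p \<alpha>) (dp \<alpha> f)) =
          op p (op q f) - op q (op p f) - op (Cm p q) f"
      unfolding e1 e2 eC sum.distrib X1 LT_sum[OF vq] LT_sum[OF vp] by simp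
  qed
qed

end


lemma sum_in_K: "subfield_char0 K \<Longrightarrow> (\<And>i. i \<in> A \<Longrightarrow> f i \<in> K) \<Longrightarrow> sum f A \<in> K"
  by (induction A rule: infinite_finite_induct) (auto simp: subfield_char0_def)

lemma prod_in_K: "subfield_char0 K \<Longrightarrow> (\<And>i. i \<in> A \<Longrightarrow> f i \<in> K) \<Longrightarrow> prod f A \<in> K"
  by (induction A rule: infinite_finite_induct) (auto simp: subfield_char0_def)

lemma cp_add: "constant_poly K f \<Longrightarrow> constant_poly K g \<Longrightarrow> subfield_char0 K \<Longrightarrow> constant_poly K (f + g)"
  unfolding constant_poly_def subfield_char0_def by (simp add: lookup_add)

lemma cp_uminus: "constant_poly K f \<Longrightarrow> subfield_char0 K \<Longrightarrow> constant_poly K (- f)"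
  unfolding constant_poly_def subfield_char0_def by simp blast

lemma cp_zero: "subfield_char0 K \<Longrightarrow> constant_poly K 0"
  unfolding constant_poly_def subfield_char0_def by simp

lemma cp_one: "subfield_char0 K \<Longrightarrow> constant_poly K 1"
  unfolding constant_poly_def subfield_char0_def by (simp add: lookup_one when_def)

lemma cp_mult: assumes "constant_poly K f" "constant_poly K g" "subfield_char0 K"
  shows "constant_poly K (f * g)"
  unfolding constant_poly_def lookup_mult_fin
  using assms unfolding constant_poly_def
  by (intro allI sum_in_K[OF assms(3)]) (auto simp: subfield_char0_def)

lemma cp_sum: "subfield_char0 K \<Longrightarrow> (\<And>i. i \<in> A \<Longrightarrow> constant_poly K (f i)) \<Longrightarrow> constant_poly K (sum f A)"
  by (induction A rule: infinite_finite_induct) (auto intro: cp_add cp_zero)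

lemma cp_prod: "subfield_char0 K \<Longrightarrow> (\<And>i. i \<in> A \<Longrightarrow> constant_poly K (f i)) \<Longrightarrow> constant_poly K (prod f A)"
  by (induction A rule: infinite_finite_induct) (auto intro: cp_mult cp_one)

lemma cp_of_nat: "subfield_char0 K \<Longrightarrow> constant_poly K (of_nat m)"
  by (induction m) (auto intro: cp_add cp_one cp_zero)

lemma cp_of_int: "subfield_char0 K \<Longrightarrow> constant_poly K (of_int k)"
proof (cases "k \<ge> 0")
  case True
  assume s: "subfield_char0 K"
  have "of_int k = (of_nat (nat k) :: ((nat \<Rightarrow>\<^sub>0 nat) \<Rightarrow>\<^sub>0 'a))" using True by simp
  then show ?thesis using cp_of_nat[OF s] by metis
next
  case False
  assume s: "subfield_char0 K"
  have "of_int k = - (of_nat (nat (- k)) :: ((nat \<Rightarrow>\<^sub>0 nat) \<Rightarrow>\<^sub>0 'a))" using False by simp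
  then show ?thesis using cp_uminus[OF cp_of_nat[OF s] s] by metis
qed

lemma cp_no_zero_div:
  fixes f g :: "(nat \<Rightarrow>\<^sub>0 nat) \<Rightarrow>\<^sub>0 'a::comm_ring_1"
  assumes s: "subfield_char0 K" and cf: "constant_poly K f" and f0: "f \<noteq> 0" and fg: "f * g = 0"
  shows "g = 0"
proof (rule ccontr)
  assume g0: "g \<noteq> 0"
  define F where "F = Poly_Mapping.keys f"
  define G where "G = Poly_Mapping.keys g"
  have fin: "finite F" "finite G" unfolding F_def G_def by auto
  have ne: "F \<noteq> {}" "G \<noteq> {}" using f0 g0 unfolding F_def G_def
    by (metis keys_zero lookup_zero not_in_keys_iff_lookup_eq_zero poly_mapping_eqI empty_iff)+
  define mF where "mF = Max F"
  define mG where "mG = Max G"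
  have mFF: "mF \<in> F" and mGG: "mG \<in> G" unfolding mF_def mG_def using fin ne by auto
  have leF: "l \<in> F \<Longrightarrow> l \<le> mF" for l unfolding mF_def using fin by auto
  have leG: "r \<in> G \<Longrightarrow> r \<le> mG" for r unfolding mG_def using fin by auto
  have key: "l \<in> F \<Longrightarrow> r \<in> G \<Longrightarrow> mF + mG = l + r \<Longrightarrow> l = mF \<and> r = mG" for l r
  proof -
    assume l: "l \<in> F" and r: "r \<in> G" and e: "mF + mG = l + r"
    show ?thesis
    proof (rule ccontr)
      assume "\<not> (l = mF \<and> r = mG)"
      then have "l < mF \<or> r < mG" using leF[OF l] leG[OF r] by auto
      then have "l + r < mF + mG"
        using leF[OF l] leG[OF r] by (meson add_le_less_mono add_less_le_mono)
      then show False using e by simp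
    qed
  qed
  have "Poly_Mapping.lookup (f * g) (mF + mG) =
     (\<Sum>l\<in>F. \<Sum>r\<in>G. if l = mF \<and> r = mG then Poly_Mapping.lookup f l * Poly_Mapping.lookup g r else 0)"
    unfolding lookup_mult_fin F_def[symmetric] G_def[symmetric]
    by (intro sum.cong refl) (use key in auto)
  also have "\<dots> = (\<Sum>l\<in>F. if l = mF then Poly_Mapping.lookup f mF * Poly_Mapping.lookup g mG else 0)"
    by (intro sum.cong refl) (use fin mGG in \<open>auto simp: sum.delta'\<close>)
  also have "\<dots> = Poly_Mapping.lookup f mF * Poly_Mapping.lookup g mG"
    using fin mFF by (simp add: sum.delta')
  finally have z: "Poly_Mapping.lookup f mF * Poly_Mapping.lookup g mG = 0" using fg by simp
  have fK: "Poly_Mapping.lookup f mF \<in> K" using cf unfolding constant_poly_def by blast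
  have fnz: "Poly_Mapping.lookup f mF \<noteq> 0" using mFF unfolding F_def by (simp add: in_keys_iff)
  obtain u where "Poly_Mapping.lookup f mF * u = 1" using s fK fnz unfolding subfield_char0_def by blast
  then have "Poly_Mapping.lookup g mG = u * (Poly_Mapping.lookup f mF * Poly_Mapping.lookup g mG)"
    by (metis mult.assoc mult.commute mult_1)
  then have "Poly_Mapping.lookup g mG = 0" using z by simp
  then show False using mGG unfolding G_def by (simp add: in_keys_iff)
qed

lemma cp_det:
  assumes s: "subfield_char0 K" and "A \<in> carrier_mat m m"
    and "\<And>i j. i < m \<Longrightarrow> j < m \<Longrightarrow> constant_poly K (A $$ (i, j))"
  shows "constant_poly K (det A)"
  unfolding det_def'[OF assms(2)]
proof (intro cp_sum[OF s] cp_mult[OF _ _ s] cp_of_int[OF s] cp_prod[OF s])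
  fix p i assume "p \<in> {p. p permutes {0..<m}}" "i \<in> {0..<m}"
  then have "p i < m" by (auto dest: permutes_in_image)
  then show "constant_poly K (A $$ (i, p i))" using assms(3) \<open>i \<in> {0..<m}\<close> by auto
qed

lemma cp_pderiv: "subfield_char0 K \<Longrightarrow> constant_poly K c \<Longrightarrow> constant_poly K (pderiv_xi j c)"
  unfolding constant_poly_def lookup_pderiv_xi subfield_char0_def
  using subfield_of_nat by (metis subfield_char0_def)



definition topc :: "((nat \<Rightarrow>\<^sub>0 nat) \<Rightarrow>\<^sub>0 'r::comm_ring_1) \<Rightarrow> nat \<Rightarrow> ((nat \<Rightarrow>\<^sub>0 nat) \<Rightarrow>\<^sub>0 'r)" where
  "topc c a = Abs_poly_mapping (\<lambda>\<alpha>. if total_deg \<alpha> = a then Poly_Mapping.lookup c \<alpha> else 0)"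

lemma lookup_topc: "Poly_Mapping.lookup (topc c a) \<alpha> = (if total_deg \<alpha> = a then Poly_Mapping.lookup c \<alpha> else 0)"
proof -
  have "{\<alpha>. (if total_deg \<alpha> = a then Poly_Mapping.lookup c \<alpha> else 0) \<noteq> 0} \<subseteq> Poly_Mapping.keys c"
    by (auto simp: in_keys_iff split: if_splits)
  then have "finite {\<alpha>. (if total_deg \<alpha> = a then Poly_Mapping.lookup c \<alpha> else 0) \<noteq> 0}"
    by (rule finite_subset) simp
  then show ?thesis unfolding topc_def by simp
qed

lemma keys_topc: "\<alpha> \<in> Poly_Mapping.keys (topc c a) \<Longrightarrow> total_deg \<alpha> = a \<and> \<alpha> \<in> Poly_Mapping.keys c"
  by (auto simp: in_keys_iff lookup_topc split: if_splits)

lemma keys_low: "\<alpha> \<in> Poly_Mapping.keys (c - topc c a) \<Longrightarrow> total_deg \<alpha> \<noteq> a \<and> \<alpha> \<in> Poly_Mapping.keys c"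
  by (auto simp: in_keys_iff lookup_topc lookup_minus split: if_splits)

lemma valid_topc: "valid_symbol n c \<Longrightarrow> valid_symbol n (topc c a)"
  unfolding valid_symbol_def using keys_topc by blast

lemma valid_mult: "valid_symbol n f \<Longrightarrow> valid_symbol n g \<Longrightarrow> valid_symbol n (f * g)"
  unfolding valid_symbol_iff using keys_mult[of f g] vmi_add by blast

lemma keys_pd: "l \<in> Poly_Mapping.keys (pderiv_xi j c) \<Longrightarrow> l + ej j \<in> Poly_Mapping.keys c"
  by (auto simp: in_keys_iff lookup_pderiv_xi)

lemma pderiv_add: "pderiv_xi j (f + g) = pderiv_xi j f + pderiv_xi j g"
  by (intro poly_mapping_eqI) (simp add: lookup_pderiv_xi lookup_add distrib_left)

lemma lookup_mult_zero:
  "(\<And>l r. l \<in> Poly_Mapping.keys f \<Longrightarrow> r \<in> Poly_Mapping.keys g \<Longrightarrow> \<gamma> \<noteq> l + r) \<Longrightarrow> Poly_Mapping.lookup (f * g) \<gamma> = 0"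
proof -
  assume H: "\<And>l r. l \<in> Poly_Mapping.keys f \<Longrightarrow> r \<in> Poly_Mapping.keys g \<Longrightarrow> \<gamma> \<noteq> l + r"
  have "\<gamma> \<notin> Poly_Mapping.keys (f * g)" using keys_mult[of f g] H by blast
  then show ?thesis by (simp add: in_keys_iff)
qed

lemma principal_symbol_topc: "principal_symbol K n x T = topc (full_symbol K n x T) (order K n x T)"
  unfolding principal_symbol_def topc_def ..

lemma deg_le_order: "\<alpha> \<in> Poly_Mapping.keys (full_symbol K n x T) \<Longrightarrow> total_deg \<alpha> \<le> order K n x T"
  unfolding order_def by (intro Max_ge) auto

context cs begin

lemma Dm_add: "Dm j (f + g) = Dm j f + Dm j g"
  by (intro poly_mapping_eqI) (simp add: lookup_Dm lookup_add d_add)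

lemma Dm_K: "(\<And>\<alpha>. Poly_Mapping.lookup c \<alpha> \<in> K) \<Longrightarrow> Dm j c = 0"
  by (intro poly_mapping_eqI) (simp add: lookup_Dm d_K)

lemma row_zero:
  assumes vp: "vs p" and vq: "vs q"
    and dpa: "\<And>\<alpha>. \<alpha> \<in> Poly_Mapping.keys p \<Longrightarrow> total_deg \<alpha> \<le> a"
    and dqb: "\<And>\<beta>. \<beta> \<in> Poly_Mapping.keys q \<Longrightarrow> total_deg \<beta> \<le> b"
    and cst: "\<And>\<alpha>. Poly_Mapping.lookup (topc p a) \<alpha> \<in> K"
    and comm: "\<And>f. op p (op q f) = op q (op p f)"
  shows "(\<Sum>j<n. pderiv_xi j (topc p a) * Dm j (topc q b)) = 0"
proof (intro poly_mapping_eqI)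
  fix \<gamma>
  define sp where "sp = topc p a"
  define sq where "sq = topc q b"
  define pl where "pl = p - sp"
  define ql where "ql = q - sq"
  have kpl: "total_deg \<alpha> < a" if h: "\<alpha> \<in> Poly_Mapping.keys pl" for \<alpha>
  proof -
    have "total_deg \<alpha> \<noteq> a \<and> \<alpha> \<in> Poly_Mapping.keys p" using keys_low[of \<alpha> p a] h unfolding pl_def sp_def by blast
    then show ?thesis using dpa[of \<alpha>] by linarith
  qed
  have kql: "total_deg \<alpha> < b" if h: "\<alpha> \<in> Poly_Mapping.keys ql" for \<alpha>
  proof -
    have "total_deg \<alpha> \<noteq> b \<and> \<alpha> \<in> Poly_Mapping.keys q" using keys_low[of \<alpha> q b] h unfolding ql_def sq_def by blast
    then show ?thesis using dqb[of \<alpha>] by linarith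
  qed
  have ksp: "\<alpha> \<in> Poly_Mapping.keys sp \<Longrightarrow> total_deg \<alpha> = a" for \<alpha>
    unfolding sp_def using keys_topc by blast
  have ksq: "\<alpha> \<in> Poly_Mapping.keys sq \<Longrightarrow> total_deg \<alpha> = b" for \<alpha>
    unfolding sq_def using keys_topc by blast
  have kpd: "l \<in> Poly_Mapping.keys (pderiv_xi j c) \<Longrightarrow> (\<And>\<alpha>. \<alpha> \<in> Poly_Mapping.keys c \<Longrightarrow> P (total_deg \<alpha>)) \<Longrightarrow> P (total_deg l + 1)" for l j c P
  proof -
    assume l: "l \<in> Poly_Mapping.keys (pderiv_xi j c)" and H: "\<And>\<alpha>. \<alpha> \<in> Poly_Mapping.keys c \<Longrightarrow> P (total_deg \<alpha>)"
    have "P (total_deg (l + ej j))" by (rule H[OF keys_pd[OF l]])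
    then show "P (total_deg l + 1)" by simp
  qed
  have kDm: "r \<in> Poly_Mapping.keys (Dm j c) \<Longrightarrow> r \<in> Poly_Mapping.keys c" for r j c
    using keys_Dm by blast
  show "Poly_Mapping.lookup (\<Sum>j<n. pderiv_xi j (topc p a) * Dm j (topc q b)) \<gamma> = Poly_Mapping.lookup 0 \<gamma>"
  proof (cases "a \<ge> 1 \<and> total_deg \<gamma> + 1 = a + b")
    case False
    have "Poly_Mapping.lookup (pderiv_xi j sp * Dm j sq) \<gamma> = 0" for j
    proof (rule lookup_mult_zero)
      fix l r assume l: "l \<in> Poly_Mapping.keys (pderiv_xi j sp)" and r: "r \<in> Poly_Mapping.keys (Dm j sq)"
      have "total_deg l + 1 = a" using kpd[OF l, of "\<lambda>t. t = a"] ksp by blast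
      moreover have "total_deg r = b" using ksq kDm[OF r] by blast
      ultimately show "\<gamma> \<noteq> l + r" using False by auto
    qed
    then show ?thesis unfolding sp_def sq_def by (simp add: lookup_sum)
  next
    case True
    have vC: "vs (Cm p q)" unfolding Cm_def
      by (intro valid_sum valid_diff valid_mult valid_pderiv valid_Dm vp vq)
    have "ol (a + b - 1) (\<lambda>f. op p (op q f) - op q (op p f) - op (Cm p q) f)"
      by (rule comm_formula[OF vp vq dpa dqb]) (use True in auto)
    then have "ol (a + b - 1) (\<lambda>f. - (op p (op q f) - op q (op p f) - op (Cm p q) f))"
      by (rule ol_uminus)
    then have "ol (a + b - 1) (op (Cm p q))" by (rule ol_cong) (simp add: comm)
    then have C0: "Poly_Mapping.lookup (Cm p q) \<gamma> = 0"
      by (rule ol_coeff[OF vC]) (use True in auto)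
    have Dsp: "Dm j sp = 0" for j unfolding sp_def by (rule Dm_K[OF cst])
    have pe: "p = sp + pl" "q = sq + ql" unfolding pl_def ql_def by simp_all
    have tmj: "Poly_Mapping.lookup (pderiv_xi j p * Dm j q - pderiv_xi j q * Dm j p) \<gamma> =
       Poly_Mapping.lookup (pderiv_xi j sp * Dm j sq) \<gamma>" for j
    proof -
      have z: "Poly_Mapping.lookup (f * g) \<gamma> = 0"
        if "\<And>l r. l \<in> Poly_Mapping.keys f \<Longrightarrow> r \<in> Poly_Mapping.keys g \<Longrightarrow> total_deg l + total_deg r + 2 \<le> a + b"
        for f g
      proof (rule lookup_mult_zero)
        fix l r assume "l \<in> Poly_Mapping.keys f" "r \<in> Poly_Mapping.keys g"
        then have "total_deg l + total_deg r + 2 \<le> a + b" by (rule that)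
        then show "\<gamma> \<noteq> l + r" using True by auto
      qed
      have z1: "Poly_Mapping.lookup (pderiv_xi j sp * Dm j ql) \<gamma> = 0"
      proof (rule z)
        fix l r assume l: "l \<in> Poly_Mapping.keys (pderiv_xi j sp)" and r: "r \<in> Poly_Mapping.keys (Dm j ql)"
        have "total_deg l + 1 = a" using kpd[OF l, of "\<lambda>t. t = a"] ksp by blast
        moreover have "total_deg r < b" using kql kDm[OF r] by blast
        ultimately show "total_deg l + total_deg r + 2 \<le> a + b" by simp
      qed
      have z2: "Poly_Mapping.lookup (pderiv_xi j pl * Dm j sq) \<gamma> = 0"
      proof (rule z)
        fix l r assume l: "l \<in> Poly_Mapping.keys (pderiv_xi j pl)" and r: "r \<in> Poly_Mapping.keys (Dm j sq)"
        have "total_deg l + 1 < a" using kpd[OF l, of "\<lambda>t. t < a"] kpl by blast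
        moreover have "total_deg r = b" using ksq kDm[OF r] by blast
        ultimately show "total_deg l + total_deg r + 2 \<le> a + b" by simp
      qed
      have z3: "Poly_Mapping.lookup (pderiv_xi j pl * Dm j ql) \<gamma> = 0"
      proof (rule z)
        fix l r assume l: "l \<in> Poly_Mapping.keys (pderiv_xi j pl)" and r: "r \<in> Poly_Mapping.keys (Dm j ql)"
        have "total_deg l + 1 < a" using kpd[OF l, of "\<lambda>t. t < a"] kpl by blast
        moreover have "total_deg r < b" using kql kDm[OF r] by blast
        ultimately show "total_deg l + total_deg r + 2 \<le> a + b" by simp
      qed
      have z4: "Poly_Mapping.lookup (pderiv_xi j sq * Dm j pl) \<gamma> = 0"
      proof (rule z)
        fix l r assume l: "l \<in> Poly_Mapping.keys (pderiv_xi j sq)" and r: "r \<in> Poly_Mapping.keys (Dm j pl)"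
        have "total_deg l + 1 = b" using kpd[OF l, of "\<lambda>t. t = b"] ksq by blast
        moreover have "total_deg r < a" using kpl kDm[OF r] by blast
        ultimately show "total_deg l + total_deg r + 2 \<le> a + b" by simp
      qed
      have z5: "Poly_Mapping.lookup (pderiv_xi j ql * Dm j pl) \<gamma> = 0"
      proof (rule z)
        fix l r assume l: "l \<in> Poly_Mapping.keys (pderiv_xi j ql)" and r: "r \<in> Poly_Mapping.keys (Dm j pl)"
        have "total_deg l + 1 < b" using kpd[OF l, of "\<lambda>t. t < b"] kql by blast
        moreover have "total_deg r < a" using kpl kDm[OF r] by blast
        ultimately show "total_deg l + total_deg r + 2 \<le> a + b" by simp
      qed
      have "pderiv_xi j p * Dm j q - pderiv_xi j q * Dm j p =
         pderiv_xi j sp * Dm j sq + pderiv_xi j sp * Dm j ql + pderiv_xi j pl * Dm j sq + pderiv_xi j pl * Dm j ql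
         - (pderiv_xi j sq * Dm j pl + pderiv_xi j ql * Dm j pl)"
      proof -
        have e1: "pderiv_xi j p = pderiv_xi j sp + pderiv_xi j pl" using pe(1) pderiv_add by metis
        have e2: "pderiv_xi j q = pderiv_xi j sq + pderiv_xi j ql" using pe(2) pderiv_add by metis
        have e3: "Dm j p = Dm j pl" using pe(1) Dm_add Dsp by (metis add_0)
        have e4: "Dm j q = Dm j sq + Dm j ql" using pe(2) Dm_add by metis
        show ?thesis unfolding e1 e2 e3 e4 by (simp add: algebra_simps)
      qed
      then show ?thesis using z1 z2 z3 z4 z5 by (simp add: lookup_add lookup_minus)
    qed
    have "Poly_Mapping.lookup (Cm p q) \<gamma> = (\<Sum>j<n. Poly_Mapping.lookup (pderiv_xi j sp * Dm j sq) \<gamma>)"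
      unfolding Cm_def lookup_sum tmj ..
    then show ?thesis using C0 unfolding sp_def sq_def by (simp add: lookup_sum)
  qed
qed

end


context cs begin

theorem main_cs:
  fixes P :: "nat \<Rightarrow> 'r \<Rightarrow> 'r" and Q :: "'r \<Rightarrow> 'r"
  assumes hP: "\<forall>i<n. P i \<in> diffops K n x"
    and hc: "\<forall>i<n. constant_poly K (principal_symbol K n x (P i))"
    and hd: "det (mat n n (\<lambda>(i, j). pderiv_xi j (principal_symbol K n x (P i)))) \<noteq> 0"
    and hQ: "Q \<in> diffops K n x"
    and hcomm: "\<forall>i<n. commutator (P i) Q = (\<lambda>f. 0)"
  shows "constant_poly K (principal_symbol K n x Q)"
proof -
  obtain q where vq: "vs q" and Qq: "Q = op q" using hQ unfolding diffops_def by blast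
  have fq: "full_symbol K n x Q = q" using full_symbol_op[OF vq] Qq by simp
  define b where "b = order K n x Q"
  define sq where "sq = topc q b"
  have psQ: "principal_symbol K n x Q = sq" unfolding principal_symbol_topc sq_def b_def fq ..
  have dqb: "total_deg \<beta> \<le> b" if "\<beta> \<in> Poly_Mapping.keys q" for \<beta>
    using deg_le_order[of \<beta> K n x Q] that fq b_def by simp
  define M where "M = mat n n (\<lambda>(i, j). pderiv_xi j (principal_symbol K n x (P i)))"
  define w where "w = vec n (\<lambda>j. Dm j sq)"
  have rows: "(\<Sum>j<n. pderiv_xi j (principal_symbol K n x (P i)) * Dm j sq) = 0" if i: "i < n" for i
  proof -
    obtain p where vp: "vs p" and Pp: "P i = op p" using hP i unfolding diffops_def by blast
    have fp: "full_symbol K n x (P i) = p" using full_symbol_op[OF vp] Pp by simp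
    define a where "a = order K n x (P i)"
    have psP: "principal_symbol K n x (P i) = topc p a" unfolding principal_symbol_topc a_def fp ..
    have dpa: "total_deg \<alpha> \<le> a" if "\<alpha> \<in> Poly_Mapping.keys p" for \<alpha>
      using deg_le_order[of \<alpha> K n x "P i"] that fp a_def by simp
    have cst: "Poly_Mapping.lookup (topc p a) \<alpha> \<in> K" for \<alpha>
    proof -
      have "constant_poly K (principal_symbol K n x (P i))" using hc i by simp
      then show ?thesis unfolding psP constant_poly_def by simp
    qed
    have comm: "op p (op q f) = op q (op p f)" for f
    proof -
      have "commutator (P i) Q f = 0" using hcomm i by simp
      then show ?thesis unfolding commutator_def Pp Qq by simp
    qed
    show ?thesis unfolding psP sq_def by (rule row_zero[OF vp vq dpa dqb cst comm])
  qed
  have Mc: "M \<in> carrier_mat n n" unfolding M_def by simp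
  have wc: "w \<in> carrier_vec n" unfolding w_def by simp
  have Mw: "M *\<^sub>v w = 0\<^sub>v n"
  proof (rule eq_vecI)
    fix i assume "i < dim_vec (0\<^sub>v n :: ((nat \<Rightarrow>\<^sub>0 nat) \<Rightarrow>\<^sub>0 'r) vec)"
    then have i: "i < n" by simp
    have "(M *\<^sub>v w) $ i = (\<Sum>j<n. pderiv_xi j (principal_symbol K n x (P i)) * Dm j sq)"
      using i unfolding M_def w_def by (simp add: scalar_prod_def atLeast0LessThan)
    then show "(M *\<^sub>v w) $ i = 0\<^sub>v n $ i" using rows[OF i] i by simp
  qed (simp add: M_def)
  have cdet: "constant_poly K (det M)"
    unfolding M_def
  proof (rule cp_det[OF sf])
    fix i j assume "i < n" "j < n"
    then show "constant_poly K (mat n n (\<lambda>(i, j). pderiv_xi j (principal_symbol K n x (P i))) $$ (i, j))"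
      using hc cp_pderiv[OF sf] by simp
  qed simp
  have detw: "det M * Dm j sq = 0" if j: "j < n" for j
  proof -
    have "(adj_mat M * M) *\<^sub>v w = adj_mat M *\<^sub>v (M *\<^sub>v w)"
      by (rule assoc_mult_mat_vec[OF adj_mat(1)[OF Mc] Mc wc])
    also have "\<dots> = adj_mat M *\<^sub>v 0\<^sub>v n" by (simp add: Mw)
    finally have e: "((det M \<cdot>\<^sub>m 1\<^sub>m n) *\<^sub>v w) $ j = (adj_mat M *\<^sub>v 0\<^sub>v n) $ j"
      using adj_mat(3)[OF Mc] by simp
    have l: "((det M \<cdot>\<^sub>m 1\<^sub>m n) *\<^sub>v w) $ j = det M * (w $ j)"
    proof -
      have "((det M \<cdot>\<^sub>m 1\<^sub>m n) *\<^sub>v w) $ j = (det M \<cdot>\<^sub>v row (1\<^sub>m n) j) \<bullet> w" using j by simp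
      also have "\<dots> = det M * (row (1\<^sub>m n) j \<bullet> w)" using j wc by simp
      also have "row (1\<^sub>m n) j \<bullet> w = (1\<^sub>m n *\<^sub>v w) $ j" using j by simp
      also have "\<dots> = w $ j" using wc by simp
      finally show ?thesis .
    qed
    have r: "(adj_mat M *\<^sub>v 0\<^sub>v n) $ j = 0"
      using j adj_mat(1)[OF Mc] by simp
    show ?thesis using e l r j unfolding w_def by simp
  qed
  have Dm0: "Dm j sq = 0" if j: "j < n" for j
    by (rule cp_no_zero_div[OF sf cdet _ detw[OF j]]) (use hd M_def in simp)
  show ?thesis
    unfolding psQ constant_poly_def
  proof
    fix \<beta>
    show "Poly_Mapping.lookup sq \<beta> \<in> K"
    proof (rule in_K_if_d)
      fix j assume "j < n"
      then have "Poly_Mapping.lookup (Dm j sq) \<beta> = 0" using Dm0 by simp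
      then show "d j (Poly_Mapping.lookup sq \<beta>) = 0" by (simp add: lookup_Dm)
    qed
  qed
qed

end

theorem mainTheorem5:
  fixes K :: "'r::comm_ring_1 set" and n :: nat and x :: "nat \<Rightarrow> 'r"
    and P :: "nat \<Rightarrow> 'r \<Rightarrow> 'r" and Q :: "'r \<Rightarrow> 'r"
  assumes "subfield_char0 K"
    and "coordinate_system K n x"
    and "\<forall>i<n. P i \<in> diffops K n x"
    and "\<forall>i<n. constant_poly K (principal_symbol K n x (P i))"
    and "det (mat n n (\<lambda>(i, j). pderiv_xi j (principal_symbol K n x (P i)))) \<noteq> 0"
    and "Q \<in> diffops K n x"
    and "\<forall>i<n. commutator (P i) Q = (\<lambda>f. 0)"
  shows "constant_poly K (principal_symbol K n x Q)"
proof -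
  interpret cs K n x using assms(1,2) by unfold_locales
  show ?thesis using main_cs[OF assms(3-7)] .
qed


end
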